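(* Let $m,n\in\mathbb{N}$, $q\in(-1,1)\setminus\{0\}$, and let $\alpha_\pm=p_\pm q_\pm$, $\beta_\pm=p_\pm+q_\pm$ with $p_\pm,q_\pm\in(-1,1)\setminus\{0\}$ (equivalently $0<\alpha_\pm^2<1$ and $4\alpha_\pm\le\beta_\pm^2\le(1+\alpha_\pm)^2$). For $\xi=(\xi_1,\dots,\xi_m)\in\mathbb{R}^m_{\rm reg}$ define $\psi_\xi:\Lambda^{(n,m)}\to\mathbb{C}$ by $\psi_\xi(\mu)=R_{\mu'}(\xi_1,\dots,\xi_m)$. If $\xi\in\mathbb{R}^m_{\rm reg}$ satisfies the Bethe Ansatz equations $$e^{2{\rm i}n\xi_j}=\frac{(1-\beta_+e^{{\rm i}\xi_j}+\alpha_+e^{2{\rm i}\xi_j})}{(e^{2{\rm i}\xi_j}-\beta_+e^{{\rm i}\xi_j}+\alpha_+)}\frac{(1-\beta_-e^{{\rm i}\xi_j}+\alpha_-e^{2{\rm i}\xi_j})}{(e^{2{\rm i}\xi_j}-\beta_-e^{{\rm i}\xi_j}+\alpha_-)}\prod_{1\le k\le m,\,k\ne j}\frac{(1-qe^{{\rm i}(\xi_j-\xi_k)})(1-qe^{{\rm i}(\xi_j+\xi_k)})}{(e^{{\rm i}(\xi_j-\xi_k)}-q)(e^{{\rm i}(\xi_j+\xi_k)}-q)}$$ for $j=1,\dots,m$, then $H\psi_\xi=E(\xi)\psi_\xi$ with $E(\xi)=2(1-q)\sum_{1\le j\le m}\cos(\xi_j)$.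
   Context: Let $\Lambda^{(n,m)}=\{\mu\in\mathbb{Z}^n\mid m\ge\mu_1\ge\cdots\ge\mu_n\ge0\}$ (similarly $\Lambda^{(m,n)}\subset\mathbb{Z}^m$ with parts between $0$ and $n$), with conventions $\mu_0\equiv m$, $\mu_{n+1}\equiv0$. Let $e_1,\dots,e_n$ be the standard unit vectors of $\mathbb{Z}^n$, and $\delta_i=1$ if $i=0$, $\delta_i=0$ otherwise. The hamiltonian $H$ acts on $\psi:\Lambda^{(n,m)}\to\mathbb{C}$ by $(H\psi)(\mu)=\bigl(\beta_+(1-q^{m-\mu_1})+\beta_-(1-q^{\mu_n})\bigr)\psi(\mu)+\sum_{1\le i\le n,\ \mu+e_i\in\Lambda^{(n,m)}}(1-\alpha_+q^{m-\mu_1-1})^{\delta_{i-1}}(1-q^{\mu_{i-1}-\mu_i})\psi(\mu+e_i)+\sum_{1\le i\le n,\ \mu-e_i\in\Lambda^{(n,m)}}(1-\alpha_-q^{\mu_n-1})^{\delta_{n-i}}(1-q^{\mu_i-\mu_{i+1}})\psi(\mu-e_i)$. For $\mu\in\Lambda^{(n,m)}$, its conjugate $\mu'\in\Lambda^{(m,n)}$ is the unique partition in $\Lambda^{(m,n)}$ in which the value $i$ occurs exactly $\mu_i-\mu_{i+1}$ times for $i=0,\dots,n$, i.e. $\mu'=(0^{m-\mu_1}1^{\mu_1-\mu_2}\cdots(n-1)^{\mu_{n-1}-\mu_n}n^{\mu_n})$ written in weakly decreasing order. Let $\mathbb{R}^m_{\rm reg}=\{\xi\in\mathbb{R}^m\mid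 2\xi_j,\ \xi_j-\xi_k,\ \xi_j+\xi_k\notin2\pi\mathbb{Z}\ \forall\,1\le j\ne k\le m\}$. For $\lambda\in\Lambda^{(m,n)}$ and $\xi\in\mathbb{R}^m_{\rm reg}$ the hyperoctahedral Hall-Littlewood polynomial is $R_\lambda(\xi_1,\dots,\xi_m)=\sum_{\sigma\in S_m}\sum_{\epsilon\in\{1,-1\}^m}C(\epsilon_1\xi_{\sigma(1)},\dots,\epsilon_m\xi_{\sigma(m)})\exp\bigl({\rm i}\epsilon_1\xi_{\sigma(1)}\lambda_1+\cdots+{\rm i}\epsilon_m\xi_{\sigma(m)}\lambda_m\bigr)$, where $C(\xi_1,\dots,\xi_m)=\prod_{1\le j\le m}\frac{1-\beta_+e^{-{\rm i}\xi_j}+\alpha_+e^{-2{\rm i}\xi_j}}{1-e^{-2{\rm i}\xi_j}}\prod_{1\le j<k\le m}\frac{1-qe^{-{\rm i}(\xi_j-\xi_k)}}{1-e^{-{\rm i}(\xi_j-\xi_k)}}\cdot\frac{1-qe^{-{\rm i}(\xi_j+\xi_k)}}{1-e^{-{\rm i}(\xi_j+\xi_k)}}$. *)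

theory Defs
  imports "HOL-Analysis.Analysis" "HOL-Combinatorics.Permutations"
begin

text \<open>Partitions mu in Lambda^(n,m) are encoded as functions nat => int, with entries
  mu 1, ..., mu n and value 0 outside the index range {1..n}.\<close>

definition Lam :: "nat \<Rightarrow> nat \<Rightarrow> (nat \<Rightarrow> int) set" where
  "Lam n m = {\<mu>. (\<forall>i. (i < 1 \<or> n < i) \<longrightarrow> \<mu> i = 0)
                 \<and> (\<forall>i\<in>{1..n}. 0 \<le> \<mu> i \<and> \<mu> i \<le> int m)
                 \<and> (\<forall>i\<in>{1..<n}. \<mu> (Suc i) \<le> \<mu> i)}"

definition ext :: "nat \<Rightarrow> nat \<Rightarrow> (nat \<Rightarrow> int) \<Rightarrow> nat \<Rightarrow> int" where
  "ext n m \<mu> i = (if i = 0 then int m else if i = Suc n then 0 else \<mu> i)"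

definition plusu :: "(nat \<Rightarrow> int) \<Rightarrow> nat \<Rightarrow> nat \<Rightarrow> int" where
  "plusu \<mu> i = (\<lambda>k. \<mu> k + (if k = i then 1 else 0))"

definition minusu :: "(nat \<Rightarrow> int) \<Rightarrow> nat \<Rightarrow> nat \<Rightarrow> int" where
  "minusu \<mu> i = (\<lambda>k. \<mu> k - (if k = i then 1 else 0))"

definition Ham :: "real \<Rightarrow> real \<Rightarrow> real \<Rightarrow> real \<Rightarrow> real \<Rightarrow> nat \<Rightarrow> nat
    \<Rightarrow> ((nat \<Rightarrow> int) \<Rightarrow> complex) \<Rightarrow> (nat \<Rightarrow> int) \<Rightarrow> complex" where
  "Ham \<alpha>p \<beta>p \<alpha>m \<beta>m q n m \<psi> \<mu> =
     complex_of_real (\<beta>p * (1 - q ^ nat (int m - ext n m \<mu> 1)) + \<beta>m * (1 - q ^ nat (ext n m \<mu> n))) * \<psi> \<mu>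
   + (\<Sum>i\<in>{i\<in>{1..n}. plusu \<mu> i \<in> Lam n m}.
        complex_of_real ((if i = 1 then 1 - \<alpha>p * q ^ nat (int m - ext n m \<mu> 1 - 1) else 1)
                         * (1 - q ^ nat (ext n m \<mu> (i - 1) - ext n m \<mu> i))) * \<psi> (plusu \<mu> i))
   + (\<Sum>i\<in>{i\<in>{1..n}. minusu \<mu> i \<in> Lam n m}.
        complex_of_real ((if i = n then 1 - \<alpha>m * q ^ nat (ext n m \<mu> n - 1) else 1)
                         * (1 - q ^ nat (ext n m \<mu> i - ext n m \<mu> (Suc i)))) * \<psi> (minusu \<mu> i))"

definition conjp :: "nat \<Rightarrow> nat \<Rightarrow> (nat \<Rightarrow> int) \<Rightarrow> (nat \<Rightarrow> int)" where
  "conjp n m \<mu> = (THE la. la \<in> Lam m n \<and>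
      (\<forall>i\<in>{0..n}. int (card {j\<in>{1..m}. la j = int i}) = ext n m \<mu> i - ext n m \<mu> (Suc i)))"

definition reg :: "nat \<Rightarrow> (nat \<Rightarrow> real) \<Rightarrow> bool" where
  "reg m \<xi> \<longleftrightarrow>
     (\<forall>j\<in>{1..m}. \<forall>k::int. 2 * \<xi> j \<noteq> 2 * pi * of_int k) \<and>
     (\<forall>j\<in>{1..m}. \<forall>l\<in>{1..m}. j \<noteq> l \<longrightarrow> (\<forall>k::int.
        \<xi> j - \<xi> l \<noteq> 2 * pi * of_int k \<and> \<xi> j + \<xi> l \<noteq> 2 * pi * of_int k))"

definition cexp :: "real \<Rightarrow> complex" where
  "cexp t = exp (\<i> * complex_of_real t)"

definition Cf :: "real \<Rightarrow> real \<Rightarrow> real \<Rightarrow> nat \<Rightarrow> (nat \<Rightarrow> real) \<Rightarrow> complex" where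
  "Cf \<alpha>p \<beta>p q m x =
     (\<Prod>j=1..m. (1 - \<beta>p * cexp (- x j) + \<alpha>p * cexp (- 2 * x j)) / (1 - cexp (- 2 * x j)))
   * (\<Prod>j=1..m. \<Prod>k=Suc j..m.
        (1 - q * cexp (- (x j - x k))) / (1 - cexp (- (x j - x k)))
      * ((1 - q * cexp (- (x j + x k))) / (1 - cexp (- (x j + x k)))))"

definition signs :: "nat \<Rightarrow> (nat \<Rightarrow> real) set" where
  "signs m = {\<epsilon>. (\<forall>j\<in>{1..m}. \<epsilon> j = 1 \<or> \<epsilon> j = -1) \<and> (\<forall>j. j \<notin> {1..m} \<longrightarrow> \<epsilon> j = 1)}"

definition HLR :: "real \<Rightarrow> real \<Rightarrow> real \<Rightarrow> nat \<Rightarrow> (nat \<Rightarrow> int) \<Rightarrow> (nat \<Rightarrow> real) \<Rightarrow> complex" where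
  "HLR \<alpha>p \<beta>p q m la \<xi> =
     (\<Sum>\<sigma>\<in>{\<sigma>. \<sigma> permutes {1..m}}. \<Sum>\<epsilon>\<in>signs m.
        Cf \<alpha>p \<beta>p q m (\<lambda>j. \<epsilon> j * \<xi> (\<sigma> j))
        * exp (\<i> * complex_of_real (\<Sum>j=1..m. \<epsilon> j * \<xi> (\<sigma> j) * of_int (la j))))"

definition bethe :: "real \<Rightarrow> real \<Rightarrow> real \<Rightarrow> real \<Rightarrow> real \<Rightarrow> nat \<Rightarrow> nat \<Rightarrow> (nat \<Rightarrow> real) \<Rightarrow> bool" where
  "bethe \<alpha>p \<beta>p \<alpha>m \<beta>m q n m \<xi> \<longleftrightarrow>
    (\<forall>j\<in>{1..m}.
      cexp (2 * real n * \<xi> j) =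
        (1 - \<beta>p * cexp (\<xi> j) + \<alpha>p * cexp (2 * \<xi> j)) / (cexp (2 * \<xi> j) - \<beta>p * cexp (\<xi> j) + \<alpha>p)
      * ((1 - \<beta>m * cexp (\<xi> j) + \<alpha>m * cexp (2 * \<xi> j)) / (cexp (2 * \<xi> j) - \<beta>m * cexp (\<xi> j) + \<alpha>m))
      * (\<Prod>k\<in>{1..m} - {j}.
          ((1 - q * cexp (\<xi> j - \<xi> k)) * (1 - q * cexp (\<xi> j + \<xi> k)))
          / ((cexp (\<xi> j - \<xi> k) - q) * (cexp (\<xi> j + \<xi> k) - q))))"

end

theory Submission
  imports Defs
begin

lemma cexp_add: "cexp (a + b) = cexp a * cexp b"
  by (simp add: cexp_def distrib_left exp_add)
lemma cexp_diff: "cexp (a - b) = cexp a / cexp b"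
  by (simp add: cexp_def right_diff_distrib exp_diff)
lemma cexp_neg: "cexp (- a) = inverse (cexp a)"
  by (simp add: cexp_def exp_minus)
lemma cexp_nz[simp]: "cexp a \<noteq> 0"
  by (simp add: cexp_def)
lemma norm_cexp[simp]: "norm (cexp a) = 1"
  by (simp add: cexp_def)
lemma cexp_2: "cexp (2 * a) = cexp a ^ 2"
  by (simp only: mult_2 cexp_add power2_eq_square)
lemma cexp_m2: "cexp (- 2 * a) = inverse (cexp a) ^ 2"
proof -
  have "- 2 * a = 2 * (- a)" by simp
  then show ?thesis by (simp only: cexp_2 cexp_neg)
qed
lemma cexp_nat: "cexp (real k * a) = cexp a ^ k"
proof (induction k)
  case 0 then show ?case by (simp add: cexp_def)
next
  case (Suc k)
  have "real (Suc k) * a = a + real k * a" by (simp add: algebra_simps)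
  then show ?case using Suc by (simp add: cexp_add)
qed
lemma cexp_eq_1_iff: "cexp t = 1 \<longleftrightarrow> (\<exists>k::int. t = 2 * pi * of_int k)"
proof -
  have "cexp t = 1 \<longleftrightarrow> (\<exists>n::int. t = real_of_int (2 * n) * pi)"
    unfolding cexp_def exp_eq_1 by simp
  also have "\<dots> \<longleftrightarrow> (\<exists>k::int. t = 2 * pi * of_int k)"
    by (simp add: mult.commute mult.left_commute)
  finally show ?thesis .
qed

lemma reg_cexp:
  assumes "reg m y" "j \<in> {1..m}"
  shows "cexp (y j) ^ 2 \<noteq> 1"
proof
  assume "cexp (y j) ^ 2 = 1"
  then have "cexp (2 * y j) = 1" by (simp add: cexp_2)
  then obtain k where "2 * y j = 2 * pi * of_int k" using cexp_eq_1_iff by blast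
  then show False using assms unfolding reg_def by blast
qed

lemma reg_cexp2:
  assumes "reg m y" "j \<in> {1..m}" "l \<in> {1..m}" "j \<noteq> l"
  shows "cexp (y j) \<noteq> cexp (y l)" "cexp (y j) * cexp (y l) \<noteq> 1"
proof
  assume "cexp (y j) = cexp (y l)"
  then have "cexp (y j - y l) = 1" by (simp add: cexp_diff)
  then obtain k where "y j - y l = 2 * pi * of_int k" using cexp_eq_1_iff by blast
  then show False using assms unfolding reg_def by blast
next
  show "cexp (y j) * cexp (y l) \<noteq> 1"
  proof
    assume "cexp (y j) * cexp (y l) = 1"
    then have "cexp (y j + y l) = 1" by (simp add: cexp_add)
    then obtain k where "y j + y l = 2 * pi * of_int k" using cexp_eq_1_iff by blast
    then show False using assms unfolding reg_def by blast
  qed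
qed

definition gq :: "real \<Rightarrow> real \<Rightarrow> complex" where
  "gq q t = (1 - q * cexp (- t)) / (1 - cexp (- t))"
definition bt :: "real \<Rightarrow> real \<Rightarrow> real \<Rightarrow> complex" where
  "bt ap bp t = (1 - bp * cexp (- t) + ap * cexp (- 2 * t)) / (1 - cexp (- 2 * t))"
definition phi :: "real \<Rightarrow> real \<Rightarrow> real \<Rightarrow> complex" where
  "phi q a b = gq q (a - b) * gq q (a + b)"
definition BB :: "real \<Rightarrow> real \<Rightarrow> nat \<Rightarrow> (nat \<Rightarrow> real) \<Rightarrow> complex" where
  "BB ap bp m x = (\<Prod>j=1..m. bt ap bp (x j))"
definition PP :: "real \<Rightarrow> nat \<Rightarrow> (nat \<Rightarrow> real) \<Rightarrow> complex" where
  "PP q m x = (\<Prod>j=1..m. \<Prod>k=Suc j..m. phi q (x j) (x k))"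

lemma Cf_alt: "Cf ap bp q m x = BB ap bp m x * PP q m x"
  unfolding Cf_def BB_def PP_def phi_def gq_def bt_def by simp

lemma gq_eq: "gq q t = (cexp t - q) / (cexp t - 1)"
proof -
  have z: "cexp t \<noteq> 0" by simp
  have a: "1 - q * inverse (cexp t) = (cexp t - q) / cexp t" using z by (simp add: field_simps)
  have b: "1 - inverse (cexp t) = (cexp t - 1) / cexp t" using z by (simp add: field_simps)
  show ?thesis unfolding gq_def cexp_neg a b using z by simp
qed

lemma gq_neg: "gq q (- t) = (1 - q * cexp t) / (1 - cexp t)"
  unfolding gq_def by simp

lemma bt_eq: "bt ap bp t = (cexp t ^ 2 - bp * cexp t + ap) / (cexp t ^ 2 - 1)"
proof -
  have z: "cexp t \<noteq> 0" by simp
  have a: "1 - bp * inverse (cexp t) + ap * inverse (cexp t) ^ 2 = (cexp t ^ 2 - bp * cexp t + ap) / cexp t ^ 2"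
    using z by (simp add: field_simps power2_eq_square)
  have b: "1 - inverse (cexp t) ^ 2 = (cexp t ^ 2 - 1) / cexp t ^ 2" using z by (simp add: field_simps power2_eq_square)
  show ?thesis unfolding bt_def cexp_neg cexp_m2 a b using z by simp
qed

lemma bt_neg: "bt ap bp (- t) = (1 - bp * cexp t + ap * cexp t ^ 2) / (1 - cexp t ^ 2)"
proof -
  have "- 2 * (- t) = 2 * t" by simp
  then show ?thesis unfolding bt_def by (simp only: minus_minus cexp_2)
qed

definition WW :: "nat \<Rightarrow> ((nat \<Rightarrow> nat) \<times> (nat \<Rightarrow> real)) set" where
  "WW m = {\<sigma>. \<sigma> permutes {1..m}} \<times> signs m"

definition yv :: "(nat \<Rightarrow> real) \<Rightarrow> (nat \<Rightarrow> nat) \<Rightarrow> (nat \<Rightarrow> real) \<Rightarrow> nat \<Rightarrow> real" where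
  "yv \<xi> \<sigma> \<epsilon> = (\<lambda>j. \<epsilon> j * \<xi> (\<sigma> j))"

definition ph :: "nat \<Rightarrow> (nat \<Rightarrow> real) \<Rightarrow> (nat \<Rightarrow> int) \<Rightarrow> complex" where
  "ph m y la = exp (\<i> * complex_of_real (\<Sum>j=1..m. y j * of_int (la j)))"

definition TT :: "real \<Rightarrow> real \<Rightarrow> real \<Rightarrow> nat \<Rightarrow> (nat \<Rightarrow> real) \<Rightarrow> (nat \<Rightarrow> int)
   \<Rightarrow> ((nat \<Rightarrow> nat) \<times> (nat \<Rightarrow> real)) \<Rightarrow> complex" where
  "TT ap bp q m \<xi> la w = Cf ap bp q m (yv \<xi> (fst w) (snd w)) * ph m (yv \<xi> (fst w) (snd w)) la"

lemma HLR_eq: "HLR ap bp q m la \<xi> = (\<Sum>w\<in>WW m. TT ap bp q m \<xi> la w)"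
  unfolding HLR_def WW_def TT_def ph_def yv_def
  by (simp add: sum.cartesian_product case_prod_unfold)

lemma invol_sum_zero:
  fixes t :: "'a \<Rightarrow> complex"
  assumes "\<And>x. x \<in> A \<Longrightarrow> g x \<in> A" "\<And>x. x \<in> A \<Longrightarrow> g (g x) = x"
    "\<And>x. x \<in> A \<Longrightarrow> t (g x) = - t x"
  shows "sum t A = 0"
proof -
  have "sum t A = sum (\<lambda>x. t (g x)) A"
    by (rule sum.reindex_bij_witness[where i=g and j=g]) (use assms in auto)
  also have "\<dots> = - sum t A" using assms(3) by (simp add: sum_negf)
  finally show ?thesis by simp
qed

lemma ph_plus:
  assumes "l \<in> {1..m}"
  shows "ph m y (plusu la l) = ph m y la * cexp (y l)"
proof -
  have e: "\<And>j. y j * of_int (plusu la l j) = y j * of_int (la j) + (if j = l then y l else 0)"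
    by (simp add: plusu_def distrib_left)
  have "(\<Sum>j=1..m. y j * of_int (plusu la l j)) = (\<Sum>j=1..m. y j * of_int (la j)) + y l"
    unfolding e sum.distrib using assms by simp
  then show ?thesis unfolding ph_def cexp_def by (simp add: distrib_left exp_add)
qed

lemma ph_minus:
  assumes "l \<in> {1..m}"
  shows "ph m y (minusu la l) = ph m y la * cexp (- y l)"
proof -
  have e: "\<And>j. y j * of_int (minusu la l j) = y j * of_int (la j) - (if j = l then y l else 0)"
    by (simp add: minusu_def right_diff_distrib)
  have "(\<Sum>j=1..m. y j * of_int (minusu la l j)) = (\<Sum>j=1..m. y j * of_int (la j)) - y l"
    unfolding e sum_subtractf using assms by simp
  then have "ph m y (minusu la l) = exp (\<i> * complex_of_real ((\<Sum>j=1..m. y j * of_int (la j)) - y l))"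
    unfolding ph_def by simp
  also have "\<dots> = exp (\<i> * complex_of_real (\<Sum>j=1..m. y j * of_int (la j)) + \<i> * complex_of_real (- y l))"
    by (rule arg_cong[where f=exp]) (simp add: algebra_simps)
  finally show ?thesis unfolding ph_def cexp_def by (simp only: exp_add)
qed

abbreviation tau :: "nat \<Rightarrow> nat \<Rightarrow> nat" where
  "tau p \<equiv> Transposition.transpose p (Suc p)"

lemma tau_tau[simp]: "tau p (tau p j) = j"
  by (simp add: Transposition.transpose_def)

lemma tau_permutes: "1 \<le> p \<Longrightarrow> Suc p \<le> m \<Longrightarrow> tau p permutes {1..m}"
  by (rule permutes_swap_id) auto

lemma WW_D:
  assumes "(\<sigma>, \<epsilon>) \<in> WW m"
  shows "\<sigma> permutes {1..m}" "\<And>j. j \<in> {1..m} \<Longrightarrow> \<epsilon> j = 1 \<or> \<epsilon> j = -1"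
    "\<And>j. j \<notin> {1..m} \<Longrightarrow> \<epsilon> j = 1"
  using assms unfolding WW_def signs_def by auto

lemma swW_in:
  assumes "(\<sigma>, \<epsilon>) \<in> WW m" "1 \<le> p" "Suc p \<le> m"
  shows "(\<sigma> \<circ> tau p, \<epsilon> \<circ> tau p) \<in> WW m"
proof -
  have tp: "tau p permutes {1..m}" using tau_permutes[OF assms(2,3)] .
  have "\<sigma> \<circ> tau p permutes {1..m}" using permutes_compose[OF tp WW_D(1)[OF assms(1)]] .
  moreover have "\<epsilon> \<circ> tau p \<in> signs m"
  proof -
    have "\<forall>j\<in>{1..m}. (\<epsilon> \<circ> tau p) j = 1 \<or> (\<epsilon> \<circ> tau p) j = -1"
      using WW_D(2)[OF assms(1)] permutes_in_image[OF tp] by auto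
    moreover have "\<forall>j. j \<notin> {1..m} \<longrightarrow> (\<epsilon> \<circ> tau p) j = 1"
      using WW_D(3)[OF assms(1)] permutes_not_in[OF tp] by auto
    ultimately show ?thesis unfolding signs_def by blast
  qed
  ultimately show ?thesis unfolding WW_def by simp
qed

lemma flW_in:
  assumes "(\<sigma>, \<epsilon>) \<in> WW m" "r \<in> {1..m}"
  shows "(\<sigma>, \<epsilon>(r := - \<epsilon> r)) \<in> WW m"
proof -
  have "\<epsilon>(r := - \<epsilon> r) \<in> signs m"
    using WW_D(2,3)[OF assms(1)] assms(2) unfolding signs_def by auto
  then show ?thesis using assms(1) unfolding WW_def by simp
qed

lemma yv_sw: "yv \<xi> (\<sigma> \<circ> t) (\<epsilon> \<circ> t) = yv \<xi> \<sigma> \<epsilon> \<circ> t"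
  by (simp add: yv_def fun_eq_iff)

lemma yv_fl: "yv \<xi> \<sigma> (\<epsilon>(r := - \<epsilon> r)) = (yv \<xi> \<sigma> \<epsilon>)(r := - yv \<xi> \<sigma> \<epsilon> r)"
  by (simp add: yv_def fun_eq_iff)

lemma reg_pair:
  assumes "reg m \<xi>" "s \<in> {1..m}" "t \<in> {1..m}" "s \<noteq> t"
    "a = 1 \<or> a = -1" "b = 1 \<or> b = -1"
  shows "a * \<xi> s + b * \<xi> t \<noteq> 2 * pi * of_int k"
proof
  assume h: "a * \<xi> s + b * \<xi> t = 2 * pi * of_int k"
  have r2: "\<forall>j\<in>{1..m}. \<forall>l\<in>{1..m}. j \<noteq> l \<longrightarrow> (\<forall>k::int.
        \<xi> j - \<xi> l \<noteq> 2 * pi * of_int k \<and> \<xi> j + \<xi> l \<noteq> 2 * pi * of_int k)"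
    using assms(1) unfolding reg_def by (rule conjunct2)
  have R: "\<And>k::int. \<xi> s - \<xi> t \<noteq> 2 * pi * of_int k \<and> \<xi> s + \<xi> t \<noteq> 2 * pi * of_int k"
          "\<And>k::int. \<xi> t - \<xi> s \<noteq> 2 * pi * of_int k"
    using r2[rule_format, OF assms(2) assms(3) assms(4)] r2[rule_format, OF assms(3) assms(2) assms(4)[symmetric]]
    by blast+
  show False
    using assms(5,6)
  proof (elim disjE)
    assume "a = 1" "b = 1" then show False using h R(1)[of k] by simp
  next
    assume "a = 1" "b = -1" then show False using h R(1)[of k] by simp
  next
    assume "a = -1" "b = 1" then show False using h R(2)[of k] by simp
  next
    assume "a = -1" "b = -1"
    then have "\<xi> s + \<xi> t = 2 * pi * of_int (- k)" using h by simp
    then show False using R(1)[of "-k"] by simp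
  qed
qed

lemma reg_yv:
  assumes "reg m \<xi>" "(\<sigma>, \<epsilon>) \<in> WW m"
  shows "reg m (yv \<xi> \<sigma> \<epsilon>)"
proof -
  have P: "\<sigma> permutes {1..m}" and E: "\<And>j. j \<in> {1..m} \<Longrightarrow> \<epsilon> j = 1 \<or> \<epsilon> j = -1"
    using WW_D[OF assms(2)] by auto
  have img: "\<And>j. j \<in> {1..m} \<Longrightarrow> \<sigma> j \<in> {1..m}" using permutes_in_image[OF P] by simp
  have inj: "\<And>j l. \<sigma> j = \<sigma> l \<Longrightarrow> j = l" using permutes_inj[OF P] by (meson injD)
  have A: "\<forall>j\<in>{1..m}. \<forall>k::int. 2 * yv \<xi> \<sigma> \<epsilon> j \<noteq> 2 * pi * of_int k"
  proof (intro ballI allI)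
    fix j and k :: int assume j: "j \<in> {1..m}"
    have r1: "\<forall>j\<in>{1..m}. \<forall>k::int. 2 * \<xi> j \<noteq> 2 * pi * of_int k"
      using assms(1) unfolding reg_def by (rule conjunct1)
    have R: "\<And>k::int. 2 * \<xi> (\<sigma> j) \<noteq> 2 * pi * of_int k" using r1 img[OF j] by blast
    show "2 * yv \<xi> \<sigma> \<epsilon> j \<noteq> 2 * pi * of_int k"
      using E[OF j]
    proof
      assume "\<epsilon> j = 1" then show ?thesis using R[of k] by (simp add: yv_def)
    next
      assume "\<epsilon> j = -1" then show ?thesis using R[of "-k"] by (simp add: yv_def)
    qed
  qed
  have B: "\<forall>j\<in>{1..m}. \<forall>l\<in>{1..m}. j \<noteq> l \<longrightarrow> (\<forall>k::int.
        yv \<xi> \<sigma> \<epsilon> j - yv \<xi> \<sigma> \<epsilon> l \<noteq> 2 * pi * of_int k \<and> yv \<xi> \<sigma> \<epsilon> j + yv \<xi> \<sigma> \<epsilon> l \<noteq> 2 * pi * of_int k)"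
  proof (intro ballI allI impI conjI)
    fix j l and k :: int assume j: "j \<in> {1..m}" and l: "l \<in> {1..m}" and jl: "j \<noteq> l"
    have st: "\<sigma> j \<noteq> \<sigma> l" using inj jl by blast
    have e2: "- \<epsilon> l = 1 \<or> - \<epsilon> l = -1" using E[OF l] by auto
    show "yv \<xi> \<sigma> \<epsilon> j - yv \<xi> \<sigma> \<epsilon> l \<noteq> 2 * pi * of_int k"
      using reg_pair[OF assms(1) img[OF j] img[OF l] st E[OF j] e2, of k] by (simp add: yv_def)
    show "yv \<xi> \<sigma> \<epsilon> j + yv \<xi> \<sigma> \<epsilon> l \<noteq> 2 * pi * of_int k"
      using reg_pair[OF assms(1) img[OF j] img[OF l] st E[OF j] E[OF l], of k] by (simp add: yv_def)
  qed
  show ?thesis unfolding reg_def using A B by blast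
qed

lemma ph_swap:
  assumes "1 \<le> p" "Suc p \<le> m" "la p = la (Suc p)"
  shows "ph m (y \<circ> tau p) la = ph m y la"
proof -
  have tp: "tau p permutes {1..m}" using tau_permutes[OF assms(1,2)] .
  have l: "\<And>j. la (tau p j) = la j" using assms(3) by (simp add: Transposition.transpose_def)
  have "(\<Sum>j=1..m. (y \<circ> tau p) j * of_int (la j)) = (\<Sum>j=1..m. ((\<lambda>j. y j * of_int (la j)) \<circ> tau p) j)"
    using l by simp
  also have "\<dots> = (\<Sum>j=1..m. y j * of_int (la j))" by (rule sum.permute[OF tp, symmetric])
  finally show ?thesis unfolding ph_def by simp
qed

lemma ph_flip0:
  assumes "la r = 0"
  shows "ph m (y(r := c)) la = ph m y la"
proof -
  have "(\<Sum>j=1..m. (y(r := c)) j * of_int (la j)) = (\<Sum>j=1..m. y j * of_int (la j))"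
    using assms by (intro sum.cong) auto
  then show ?thesis unfolding ph_def by (simp only:)
qed

lemma ph_flip1:
  assumes "la 1 = int n" "1 \<le> m"
  shows "ph m (y(1 := - y 1)) la = ph m y la * inverse (cexp (y 1)) ^ (2 * n)"
proof -
  have e: "\<And>j. (y(1 := - y 1)) j * of_int (la j) = y j * of_int (la j) + (if j = 1 then - 2 * real n * y 1 else 0)"
    using assms by auto
  have s: "(\<Sum>j=1..m. (y(1 := - y 1)) j * of_int (la j)) = (\<Sum>j=1..m. y j * of_int (la j)) + (- 2 * real n * y 1)"
    unfolding e sum.distrib using assms by simp
  have "ph m (y(1 := - y 1)) la = exp (\<i> * complex_of_real (\<Sum>j=1..m. y j * of_int (la j)) + \<i> * complex_of_real (real (2 * n) * (- y 1)))"
    unfolding ph_def s by (rule arg_cong[where f=exp]) (simp add: algebra_simps)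
  also have "\<dots> = ph m y la * cexp (real (2 * n) * (- y 1))"
    unfolding ph_def cexp_def by (simp only: exp_add)
  finally show ?thesis by (simp only: cexp_nat cexp_neg)
qed

lemma BB_perm: "t permutes {1..m} \<Longrightarrow> BB ap bp m (x \<circ> t) = BB ap bp m x"
  unfolding BB_def using prod.permute[of t "{1..m}" "\<lambda>j. bt ap bp (x j)"] by (simp add: comp_def)

lemma BB_split: "r \<in> {1..m} \<Longrightarrow> BB ap bp m x = bt ap bp (x r) * (\<Prod>j\<in>{1..m}-{r}. bt ap bp (x j))"
  unfolding BB_def by (rule prod.remove) auto

lemma BB_upd: "r \<in> {1..m} \<Longrightarrow> BB ap bp m (x(r := c)) = bt ap bp c * (\<Prod>j\<in>{1..m}-{r}. bt ap bp (x j))"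
  by (subst BB_split[of r]) auto

definition Pr :: "nat \<Rightarrow> (nat \<times> nat) set" where
  "Pr m = (SIGMA j:{1..m}. {Suc j..m})"

lemma finite_Pr[simp]: "finite (Pr m)"
  unfolding Pr_def by auto

lemma PP_Pr: "PP q m x = (\<Prod>(j,k)\<in>Pr m. phi q (x j) (x k))"
  unfolding PP_def Pr_def by (rule prod.Sigma) auto

lemma tau_Pr:
  assumes "1 \<le> p" "Suc p \<le> m" "jk \<in> Pr m - {(p, Suc p)}"
  shows "(tau p (fst jk), tau p (snd jk)) \<in> Pr m - {(p, Suc p)}"
  using assms unfolding Pr_def Transposition.transpose_def
  by (cases jk) (auto split: if_splits)

lemma PP_swap:
  assumes "1 \<le> p" "Suc p \<le> m"
  shows "PP q m (x \<circ> tau p) * gq q (x p - x (Suc p)) = PP q m x * gq q (x (Suc p) - x p)"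
proof -
  define P' where "P' = Pr m - {(p, Suc p)}"
  have mem: "(p, Suc p) \<in> Pr m" using assms unfolding Pr_def by auto
  have e1: "PP q m x = phi q (x p) (x (Suc p)) * (\<Prod>(j,k)\<in>P'. phi q (x j) (x k))"
    unfolding PP_Pr P'_def using prod.remove[OF finite_Pr mem, of "\<lambda>(j,k). phi q (x j) (x k)"] by simp
  have e2: "PP q m (x \<circ> tau p) = phi q (x (Suc p)) (x p) * (\<Prod>(j,k)\<in>P'. phi q (x (tau p j)) (x (tau p k)))"
    unfolding PP_Pr P'_def using prod.remove[OF finite_Pr mem, of "\<lambda>(j,k). phi q ((x \<circ> tau p) j) ((x \<circ> tau p) k)"]
    by simp
  have e3: "(\<Prod>(j,k)\<in>P'. phi q (x (tau p j)) (x (tau p k))) = (\<Prod>(j,k)\<in>P'. phi q (x j) (x k))"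
  proof (rule prod.reindex_bij_witness[where i="\<lambda>(j,k). (tau p j, tau p k)" and j="\<lambda>(j,k). (tau p j, tau p k)"])
    fix a assume "a \<in> P'"
    then show "(case a of (j, k) \<Rightarrow> (tau p j, tau p k)) \<in> P'"
      using tau_Pr[OF assms, of a] unfolding P'_def by (cases a) auto
  next
    fix a assume "a \<in> P'"
    then show "(case a of (j, k) \<Rightarrow> (tau p j, tau p k)) \<in> P'"
      using tau_Pr[OF assms, of a] unfolding P'_def by (cases a) auto
  qed auto
  have e4: "PP q m (x \<circ> tau p) = phi q (x (Suc p)) (x p) * (\<Prod>(j,k)\<in>P'. phi q (x j) (x k))"
    using e2 e3 by simp
  show ?thesis unfolding e1 e4 phi_def by (simp add: add.commute mult_ac)
qed

lemma PP_flipm: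
  assumes "1 \<le> m"
  shows "PP q m (x(m := - x m)) = PP q m x"
  unfolding PP_def
proof (rule prod.cong[OF refl], rule prod.cong[OF refl])
  fix j k assume j: "j \<in> {1..m}" and k: "k \<in> {Suc j..m}"
  then have jm: "j \<noteq> m" by auto
  show "phi q ((x(m := - x m)) j) ((x(m := - x m)) k) = phi q (x j) (x k)"
    using jm by (cases "k = m") (simp_all add: phi_def mult.commute)
qed

lemma PP_split1:
  assumes "1 \<le> m"
  shows "PP q m x = (\<Prod>k=Suc 1..m. phi q (x 1) (x k)) * (\<Prod>j=Suc 1..m. \<Prod>k=Suc j..m. phi q (x j) (x k))"
  unfolding PP_def using prod.atLeast_Suc_atMost[OF assms] by simp

lemma PP_rest_upd:
  "(\<Prod>j=Suc 1..m. \<Prod>k=Suc j..m. phi q ((x(1 := c)) j) ((x(1 := c)) k))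
   = (\<Prod>j=Suc 1..m. \<Prod>k=Suc j..m. phi q (x j) (x k))"
  by (rule prod.cong[OF refl], rule prod.cong[OF refl]) auto

lemma Cf_swap:
  assumes "reg m y" "1 \<le> p" "Suc p \<le> m"
  shows "Cf ap bp q m (y \<circ> tau p) * (cexp (y p) - q * cexp (y (Suc p)))
       = - (Cf ap bp q m y * (cexp (y (Suc p)) - q * cexp (y p)))"
proof -
  define a b where "a = cexp (y p)" and "b = cexp (y (Suc p))"
  have ab: "a \<noteq> b" unfolding a_def b_def using reg_cexp2(1)[OF assms(1), of p "Suc p"] assms by auto
  have a0: "a \<noteq> 0" "b \<noteq> 0" unfolding a_def b_def by auto
  have g1: "gq q (y p - y (Suc p)) = (a - q * b) / (a - b)"
    unfolding gq_eq cexp_diff a_def[symmetric] b_def[symmetric] using a0 ab by (simp add: field_simps)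
  have g2: "gq q (y (Suc p) - y p) = (b - q * a) / (b - a)"
    unfolding gq_eq cexp_diff a_def[symmetric] b_def[symmetric] using a0 ab by (simp add: field_simps)
  have S: "PP q m (y \<circ> tau p) * ((a - q * b) / (a - b)) = PP q m y * ((b - q * a) / (b - a))"
    using PP_swap[OF assms(2,3), of q y] unfolding g1 g2 .
  have ab': "a - b \<noteq> 0" "b - a \<noteq> 0" using ab by auto
  have S2: "PP q m (y \<circ> tau p) * (a - q * b) = - (PP q m y * (b - q * a))"
  proof -
    have "PP q m (y \<circ> tau p) * (a - q * b) = PP q m (y \<circ> tau p) * ((a - q * b) / (a - b)) * (a - b)"
      using ab' by simp
    also have "\<dots> = PP q m y * ((b - q * a) / (b - a)) * (a - b)" using S by simp
    also have "\<dots> = - (PP q m y * (b - q * a))" using ab' by (simp add: field_simps)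
    finally show ?thesis .
  qed
  have B: "BB ap bp m (y \<circ> tau p) = BB ap bp m y" using BB_perm[OF tau_permutes[OF assms(2,3)]] .
  show ?thesis unfolding Cf_alt B a_def[symmetric] b_def[symmetric]
    using S2 by (simp add: mult.assoc)
qed

lemma alg0:
  fixes z :: complex
  assumes "z \<noteq> 0" "z ^ 2 \<noteq> 1"
  shows "(1 - bp * z + ap * z ^ 2) / (1 - z ^ 2) * (z - bp + ap * inverse z)
       = - ((z ^ 2 - bp * z + ap) / (z ^ 2 - 1) * (inverse z - bp + ap * z))"
proof -
  have n: "1 - z ^ 2 \<noteq> 0" "z ^ 2 - 1 \<noteq> 0" using assms by auto
  have "(1 - bp * z + ap * z ^ 2) / (1 - z ^ 2) * (z - bp + ap * inverse z)
       = (1 - bp * z + ap * z ^ 2) * (z^2 - bp * z + ap) / (z * (1 - z ^ 2))"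
    using n assms(1) by (simp add: field_simps power2_eq_square)
  also have "\<dots> = - ((z ^ 2 - bp * z + ap) / (z ^ 2 - 1) * (inverse z - bp + ap * z))"
    using n assms(1) by (simp add: field_simps power2_eq_square)
  finally show ?thesis .
qed

lemma Cf_flipm:
  assumes "reg m y" "1 \<le> m"
  shows "Cf ap bp q m (y(m := - y m)) * (cexp (y m) - bp + ap * inverse (cexp (y m)))
       = - (Cf ap bp q m y * (inverse (cexp (y m)) - bp + ap * cexp (y m)))"
proof -
  have r: "m \<in> {1..m}" using assms by auto
  define R where "R = (\<Prod>j\<in>{1..m}-{m}. bt ap bp (y j))"
  have B1: "BB ap bp m (y(m := - y m)) = bt ap bp (- y m) * R" unfolding R_def using BB_upd[OF r] .
  have B2: "BB ap bp m y = bt ap bp (y m) * R" unfolding R_def using BB_split[OF r] .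
  have P: "PP q m (y(m := - y m)) = PP q m y" using PP_flipm[OF assms(2)] .
  have z2: "cexp (y m) ^ 2 \<noteq> 1" using reg_cexp[OF assms(1) r] .
  have A: "bt ap bp (- y m) * (cexp (y m) - bp + ap * inverse (cexp (y m)))
      = - (bt ap bp (y m) * (inverse (cexp (y m)) - bp + ap * cexp (y m)))"
    unfolding bt_neg[of ap bp "y m"] bt_eq[of ap bp "y m"] using alg0[OF cexp_nz z2] .
  show ?thesis unfolding Cf_alt B1 B2 P
    using A by (simp add: mult_ac)
qed

definition Gam :: "real \<Rightarrow> complex \<Rightarrow> complex \<Rightarrow> complex" where
  "Gam q z v = ((1 - q * (z / v)) * (1 - q * (z * v))) / ((z / v - q) * (z * v - q))"

definition Bf :: "real \<Rightarrow> real \<Rightarrow> complex \<Rightarrow> complex" where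
  "Bf a b z = (1 - b * z + a * z ^ 2) / (z ^ 2 - b * z + a)"

lemma unit_ne:
  fixes u :: complex and c :: real
  assumes "norm u = 1" "\<bar>c\<bar> < 1"
  shows "1 - c * u \<noteq> 0" "u - c \<noteq> 0"
proof
  assume "1 - c * u = 0"
  then have "norm (complex_of_real c * u) = 1" by (metis eq_iff_diff_eq_0 norm_one)
  then show False using assms by (simp add: norm_mult)
next
  show "u - c \<noteq> 0"
  proof
    assume "u - c = 0"
    then have "norm (complex_of_real c) = 1" using assms(1) by simp
    then show False using assms by simp
  qed
qed

lemma quad_ne:
  fixes z :: complex and p r :: real
  assumes "norm z = 1" "\<bar>p\<bar> < 1" "\<bar>r\<bar> < 1"
  shows "1 - (p + r) * z + (p * r) * z ^ 2 \<noteq> 0" "z ^ 2 - (p + r) * z + (p * r) \<noteq> 0"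
proof -
  have "1 - (p + r) * z + (p * r) * z ^ 2 = (1 - p * z) * (1 - r * z)"
    by (simp add: algebra_simps power2_eq_square)
  then show "1 - (p + r) * z + (p * r) * z ^ 2 \<noteq> 0"
    using unit_ne(1)[OF assms(1,2)] unit_ne(1)[OF assms(1,3)] by simp
  have "z ^ 2 - (p + r) * z + (p * r) = (z - p) * (z - r)"
    by (simp add: algebra_simps power2_eq_square)
  then show "z ^ 2 - (p + r) * z + (p * r) \<noteq> 0"
    using unit_ne(2)[OF assms(1,2)] unit_ne(2)[OF assms(1,3)] by simp
qed

lemma Bf_inv:
  fixes z :: complex
  assumes "norm z = 1" "\<bar>p\<bar> < 1" "\<bar>r\<bar> < 1"
  shows "Bf (p * r) (p + r) (inverse z) = inverse (Bf (p * r) (p + r) z)"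
proof -
  have z0: "z \<noteq> 0" using assms(1) by auto
  have n1: "1 - (p + r) * z + (p * r) * z ^ 2 \<noteq> 0" and n2: "z ^ 2 - (p + r) * z + (p * r) \<noteq> 0"
    using quad_ne[OF assms] by auto
  have e1: "1 - (p + r) * inverse z + (p * r) * inverse z ^ 2 = (z ^ 2 - (p + r) * z + (p * r)) / z ^ 2"
    using z0 by (simp add: field_simps power2_eq_square)
  have e2: "inverse z ^ 2 - (p + r) * inverse z + (p * r) = (1 - (p + r) * z + (p * r) * z ^ 2) / z ^ 2"
    using z0 by (simp add: field_simps power2_eq_square)
  have "Bf (p * r) (p + r) (inverse z) = (z ^ 2 - (p + r) * z + (p * r)) / (1 - (p + r) * z + (p * r) * z ^ 2)"
    unfolding Bf_def of_real_mult[symmetric] of_real_add[symmetric] e1 e2 using z0 by simp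
  then show ?thesis unfolding Bf_def by simp
qed

lemma Gam_inv_v: "v \<noteq> 0 \<Longrightarrow> Gam q z (inverse v) = Gam q z v"
  unfolding Gam_def by (simp add: field_simps mult_ac)

lemma Gam_inv:
  fixes z v :: complex
  assumes "norm z = 1" "norm v = 1" "\<bar>q\<bar> < 1"
  shows "Gam q (inverse z) v = inverse (Gam q z v)"
proof -
  have z0: "z \<noteq> 0" "v \<noteq> 0" using assms by auto
  have u1: "norm (z / v) = 1" "norm (z * v) = 1" using assms by (simp_all add: norm_mult norm_divide)
  have n: "1 - q * (z / v) \<noteq> 0" "1 - q * (z * v) \<noteq> 0" "z / v - q \<noteq> 0" "z * v - q \<noteq> 0"
    using unit_ne[OF u1(1) assms(3)] unit_ne[OF u1(2) assms(3)] by auto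
  have a1: "Gam q z v = ((v - q * z) * (1 - q * (z * v))) / ((z - q * v) * (z * v - q))"
  proof -
    have "1 - q * (z / v) = (v - q * z) / v" "z / v - q = (z - q * v) / v" using z0 by (simp_all add: field_simps)
    then show ?thesis unfolding Gam_def using z0 by simp
  qed
  have a2: "Gam q (inverse z) v = ((z * v - q) * (z - q * v)) / ((1 - q * (z * v)) * (v - q * z))"
  proof -
    have "1 - q * (inverse z / v) = (z * v - q) / (z * v)" "1 - q * (inverse z * v) = (z - q * v) / z"
      "inverse z / v - q = (1 - q * (z * v)) / (z * v)" "inverse z * v - q = (v - q * z) / z"
      using z0 by (simp_all add: field_simps)
    then show ?thesis unfolding Gam_def using z0 by simp
  qed
  show ?thesis unfolding a1 a2 by (simp add: mult_ac)
qed

lemma bethe_conv: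
  assumes "bethe ap bp am bm q n m \<xi>" "s \<in> {1..m}"
  shows "cexp (\<xi> s) ^ (2 * n) = Bf ap bp (cexp (\<xi> s)) * Bf am bm (cexp (\<xi> s))
           * (\<Prod>k\<in>{1..m}-{s}. Gam q (cexp (\<xi> s)) (cexp (\<xi> k)))"
proof -
  have e: "cexp (2 * real n * \<xi> s) = cexp (\<xi> s) ^ (2 * n)"
    using cexp_nat[of "2 * n" "\<xi> s"] by (simp add: mult.assoc)
  have "cexp (2 * real n * \<xi> s) =
        (1 - bp * cexp (\<xi> s) + ap * cexp (2 * \<xi> s)) / (cexp (2 * \<xi> s) - bp * cexp (\<xi> s) + ap)
      * ((1 - bm * cexp (\<xi> s) + am * cexp (2 * \<xi> s)) / (cexp (2 * \<xi> s) - bm * cexp (\<xi> s) + am))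
      * (\<Prod>k\<in>{1..m} - {s}.
          ((1 - q * cexp (\<xi> s - \<xi> k)) * (1 - q * cexp (\<xi> s + \<xi> k)))
          / ((cexp (\<xi> s - \<xi> k) - q) * (cexp (\<xi> s + \<xi> k) - q)))"
    using assms unfolding bethe_def by blast
  then show ?thesis unfolding e Bf_def Gam_def cexp_2 cexp_diff cexp_add by simp
qed

lemma bethe_z:
  assumes B: "bethe (pp * qp) (pp + qp) (pm * qm) (pm + qm) q n m \<xi>"
    and bnd: "\<bar>pp\<bar> < 1" "\<bar>qp\<bar> < 1" "\<bar>pm\<bar> < 1" "\<bar>qm\<bar> < 1" "\<bar>q\<bar> < 1"
    and W: "(\<sigma>, \<epsilon>) \<in> WW m" and m1: "1 \<le> m"
  defines "z \<equiv> cexp (yv \<xi> \<sigma> \<epsilon> 1)"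
  shows "z ^ (2 * n) = Bf (pp * qp) (pp + qp) z * Bf (pm * qm) (pm + qm) z
           * (\<Prod>k\<in>{1..m}-{\<sigma> 1}. Gam q z (cexp (\<xi> k)))"
proof -
  have P: "\<sigma> permutes {1..m}" using WW_D(1)[OF W] .
  have s: "\<sigma> 1 \<in> {1..m}" using permutes_in_image[OF P] m1 by auto
  define w where "w = cexp (\<xi> (\<sigma> 1))"
  have bw: "w ^ (2 * n) = Bf (pp * qp) (pp + qp) w * Bf (pm * qm) (pm + qm) w
           * (\<Prod>k\<in>{1..m}-{\<sigma> 1}. Gam q w (cexp (\<xi> k)))"
    unfolding w_def using bethe_conv[OF B s] .
  have e: "\<epsilon> 1 = 1 \<or> \<epsilon> 1 = -1" using WW_D(2)[OF W] m1 by auto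
  then show ?thesis
  proof
    assume "\<epsilon> 1 = 1"
    then have "z = w" unfolding z_def w_def yv_def by simp
    then show ?thesis using bw by simp
  next
    assume "\<epsilon> 1 = -1"
    then have zw: "z = inverse w" unfolding z_def w_def yv_def by (simp add: cexp_neg)
    have nw: "norm w = 1" unfolding w_def by simp
    have "z ^ (2 * n) = inverse (w ^ (2 * n))" unfolding zw by (simp add: power_inverse)
    also have "\<dots> = inverse (Bf (pp * qp) (pp + qp) w) * inverse (Bf (pm * qm) (pm + qm) w)
           * (\<Prod>k\<in>{1..m}-{\<sigma> 1}. inverse (Gam q w (cexp (\<xi> k))))"
      unfolding bw by (simp add: inverse_mult_distrib prod_inversef[symmetric] comp_def)
    also have "\<dots> = Bf (pp * qp) (pp + qp) z * Bf (pm * qm) (pm + qm) z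
           * (\<Prod>k\<in>{1..m}-{\<sigma> 1}. Gam q z (cexp (\<xi> k)))"
      unfolding zw Bf_inv[OF nw bnd(1,2)] Bf_inv[OF nw bnd(3,4)]
      using Gam_inv[OF nw _ bnd(5)] by simp
    finally show ?thesis .
  qed
qed

lemma Gprod:
  assumes W: "(\<sigma>, \<epsilon>) \<in> WW m" and m1: "1 \<le> m"
  shows "(\<Prod>k\<in>{1..m}-{\<sigma> 1}. Gam q z (cexp (\<xi> k))) = (\<Prod>k=Suc 1..m. Gam q z (cexp (yv \<xi> \<sigma> \<epsilon> k)))"
proof -
  have P: "\<sigma> permutes {1..m}" using WW_D(1)[OF W] .
  have e: "\<And>k. k \<in> {Suc 1..m} \<Longrightarrow> Gam q z (cexp (yv \<xi> \<sigma> \<epsilon> k)) = Gam q z (cexp (\<xi> (\<sigma> k)))"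
  proof -
    fix k assume k: "k \<in> {Suc 1..m}"
    then have "\<epsilon> k = 1 \<or> \<epsilon> k = -1" using WW_D(2)[OF W] by auto
    then show "Gam q z (cexp (yv \<xi> \<sigma> \<epsilon> k)) = Gam q z (cexp (\<xi> (\<sigma> k)))"
      unfolding yv_def by (auto simp: cexp_neg Gam_inv_v)
  qed
  have img: "\<sigma> ` {Suc 1..m} = {1..m} - {\<sigma> 1}"
  proof -
    have "{Suc 1..m} = {1..m} - {1}" by auto
    then have "\<sigma> ` {Suc 1..m} = \<sigma> ` {1..m} - \<sigma> ` {1}"
      using image_set_diff[OF permutes_inj[OF P]] by simp
    then show ?thesis using permutes_image[OF P] by simp
  qed
  have inj: "inj_on \<sigma> {Suc 1..m}" using permutes_inj[OF P] by (simp add: inj_on_def inj_def)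
  have "(\<Prod>k\<in>{1..m}-{\<sigma> 1}. Gam q z (cexp (\<xi> k))) = (\<Prod>k=Suc 1..m. Gam q z (cexp (\<xi> (\<sigma> k))))"
    unfolding img[symmetric] using prod.reindex[OF inj, of "\<lambda>k. Gam q z (cexp (\<xi> k))"] by simp
  also have "\<dots> = (\<Prod>k=Suc 1..m. Gam q z (cexp (yv \<xi> \<sigma> \<epsilon> k)))"
    using e by (intro prod.cong) auto
  finally show ?thesis .
qed

lemma alg2:
  fixes u1 u2 :: complex
  assumes "u1 \<noteq> 1" "u2 \<noteq> 1" "u1 - q \<noteq> 0" "u2 - q \<noteq> 0"
  shows "(1 - q * u1) / (1 - u1) * ((1 - q * u2) / (1 - u2))
       = (u2 - q) / (u2 - 1) * ((u1 - q) / (u1 - 1)) * (((1 - q * u2) * (1 - q * u1)) / ((u2 - q) * (u1 - q)))"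
proof -
  have n: "1 - u1 \<noteq> 0" "1 - u2 \<noteq> 0" "u1 - 1 \<noteq> 0" "u2 - 1 \<noteq> 0" using assms by auto
  have "(u2 - q) / (u2 - 1) * ((u1 - q) / (u1 - 1)) * (((1 - q * u2) * (1 - q * u1)) / ((u2 - q) * (u1 - q)))
     = ((u2 - q) * (u1 - q) * ((1 - q * u2) * (1 - q * u1))) / ((u2 - 1) * (u1 - 1) * ((u2 - q) * (u1 - q)))"
    by simp
  also have "\<dots> = ((1 - q * u2) * (1 - q * u1)) / ((u2 - 1) * (u1 - 1))"
    using assms(3,4) by (simp add: mult.commute mult.left_commute)
  also have "\<dots> = (1 - q * u1) / (1 - u1) * ((1 - q * u2) / (1 - u2))"
    using n by (simp add: field_simps)
  finally show ?thesis by simp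
qed

lemma phi_neg:
  assumes "cexp (a + b) \<noteq> 1" "cexp (a - b) \<noteq> 1" "\<bar>q\<bar> < 1"
  shows "phi q (- a) b = phi q a b * Gam q (cexp a) (cexp b)"
proof -
  have n: "cexp (a + b) - q \<noteq> 0" "cexp (a - b) - q \<noteq> 0"
    using unit_ne(2)[OF norm_cexp assms(3)] by auto
  have e1: "- a - b = - (a + b)" "- a + b = - (a - b)" by auto
  have "phi q (- a) b = (1 - q * cexp (a + b)) / (1 - cexp (a + b)) * ((1 - q * cexp (a - b)) / (1 - cexp (a - b)))"
    unfolding phi_def e1 gq_neg by (simp add: mult.commute)
  also have "\<dots> = (cexp (a - b) - q) / (cexp (a - b) - 1) * ((cexp (a + b) - q) / (cexp (a + b) - 1))
      * (((1 - q * cexp (a - b)) * (1 - q * cexp (a + b))) / ((cexp (a - b) - q) * (cexp (a + b) - q)))"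
    using alg2[OF assms(1,2) n] .
  also have "\<dots> = phi q a b * Gam q (cexp a) (cexp b)"
    unfolding phi_def gq_eq Gam_def cexp_add cexp_diff by simp
  finally show ?thesis .
qed

lemma alg1a:
  fixes Np Dp Nm Dm W G z d :: complex
  assumes "Np \<noteq> 0" "Dp \<noteq> 0" "Nm \<noteq> 0" "Dm \<noteq> 0" "W \<noteq> 0" "z \<noteq> 0" "d \<noteq> 0"
    and HW: "W = Np / Dp * (Nm / Dm) * G"
  shows "Np / d * G * inverse W * (Nm / z) = - (Dp / (- d) * (Dm / z))"
proof -
  have G: "G = W * Dp * Dm / (Np * Nm)" using HW assms by (simp add: field_simps)
  show ?thesis unfolding G using assms(1-7) by (simp add: field_simps)
qed

lemma alg1:
  fixes z W G ap bp am bm :: complex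
  assumes z0: "z \<noteq> 0" and z2: "z ^ 2 \<noteq> 1" and W0: "W \<noteq> 0"
    and Np: "1 - bp * z + ap * z ^ 2 \<noteq> 0" and Dp: "z ^ 2 - bp * z + ap \<noteq> 0"
    and Nm: "1 - bm * z + am * z ^ 2 \<noteq> 0" and Dm: "z ^ 2 - bm * z + am \<noteq> 0"
    and HW: "W = (1 - bp * z + ap * z ^ 2) / (z ^ 2 - bp * z + ap) * ((1 - bm * z + am * z ^ 2) / (z ^ 2 - bm * z + am)) * G"
  shows "(1 - bp * z + ap * z ^ 2) / (1 - z ^ 2) * G * inverse W * (inverse z + am * z - bm)
       = - ((z ^ 2 - bp * z + ap) / (z ^ 2 - 1) * (z + am * inverse z - bm))"
proof -
  have i1: "inverse z + am * z - bm = (1 - bm * z + am * z ^ 2) / z" using z0 by (simp add: field_simps power2_eq_square)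
  have i2: "z + am * inverse z - bm = (z ^ 2 - bm * z + am) / z" using z0 by (simp add: field_simps power2_eq_square)
  have d: "1 - z ^ 2 \<noteq> 0" using z2 by auto
  have e: "z ^ 2 - 1 = - (1 - z ^ 2)" by simp
  show ?thesis unfolding i1 i2 e by (rule alg1a[OF Np Dp Nm Dm W0 z0 d HW])
qed

lemma Cf_flip1:
  fixes ap bp am bm q :: real
  assumes reg: "reg m y" and m1: "1 \<le> m" and qb: "\<bar>q\<bar> < 1"
    and Np: "1 - bp * cexp (y 1) + ap * cexp (y 1) ^ 2 \<noteq> 0" and Dp: "cexp (y 1) ^ 2 - bp * cexp (y 1) + ap \<noteq> 0"
    and Nm: "1 - bm * cexp (y 1) + am * cexp (y 1) ^ 2 \<noteq> 0" and Dm: "cexp (y 1) ^ 2 - bm * cexp (y 1) + am \<noteq> 0"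
    and HB: "cexp (y 1) ^ (2 * n) = Bf ap bp (cexp (y 1)) * Bf am bm (cexp (y 1))
              * (\<Prod>k=Suc 1..m. Gam q (cexp (y 1)) (cexp (y k)))"
  shows "Cf ap bp q m (y(1 := - y 1)) * inverse (cexp (y 1)) ^ (2 * n) * (inverse (cexp (y 1)) + am * cexp (y 1) - bm)
       = - (Cf ap bp q m y * (cexp (y 1) + am * inverse (cexp (y 1)) - bm))"
proof -
  define z where "z = cexp (y 1)"
  define G where "G = (\<Prod>k=Suc 1..m. Gam q z (cexp (y k)))"
  define RB where "RB = (\<Prod>j\<in>{1..m}-{1}. bt ap bp (y j))"
  define RP where "RP = (\<Prod>j=Suc 1..m. \<Prod>k=Suc j..m. phi q (y j) (y k))"
  define Q where "Q = (\<Prod>k=Suc 1..m. phi q (y 1) (y k))"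
  have r1: "1 \<in> {1..m}" using m1 by auto
  have B1: "BB ap bp m (y(1 := - y 1)) = bt ap bp (- y 1) * RB" unfolding RB_def using BB_upd[OF r1] .
  have B2: "BB ap bp m y = bt ap bp (y 1) * RB" unfolding RB_def using BB_split[OF r1] .
  have P2: "PP q m y = Q * RP" unfolding Q_def RP_def using PP_split1[OF m1] .
  have Qn: "(\<Prod>k=Suc 1..m. phi q (- y 1) (y k)) = Q * G"
  proof -
    have "(\<Prod>k=Suc 1..m. phi q (- y 1) (y k)) = (\<Prod>k=Suc 1..m. phi q (y 1) (y k) * Gam q z (cexp (y k)))"
    proof (rule prod.cong[OF refl])
      fix k assume k: "k \<in> {Suc 1..m}"
      then have k': "k \<in> {1..m}" "1 \<noteq> k" by auto
      have a: "cexp (y 1 + y k) \<noteq> 1" unfolding cexp_add using reg_cexp2(2)[OF reg r1 k'] .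
      have b: "cexp (y 1 - y k) \<noteq> 1" unfolding cexp_diff using reg_cexp2(1)[OF reg r1 k'] by simp
      show "phi q (- y 1) (y k) = phi q (y 1) (y k) * Gam q z (cexp (y k))"
        unfolding z_def using phi_neg[OF a b qb] .
    qed
    then show ?thesis unfolding Q_def G_def by (simp add: prod.distrib)
  qed
  have P1: "PP q m (y(1 := - y 1)) = Q * G * RP"
  proof -
    have "PP q m (y(1 := - y 1)) = (\<Prod>k=Suc 1..m. phi q ((y(1 := - y 1)) 1) ((y(1 := - y 1)) k)) * RP"
      unfolding RP_def using PP_split1[OF m1, of q "y(1 := - y 1)"] PP_rest_upd[where x=y and c="- y 1" and q=q and m=m] by simp
    also have "(\<Prod>k=Suc 1..m. phi q ((y(1 := - y 1)) 1) ((y(1 := - y 1)) k)) = (\<Prod>k=Suc 1..m. phi q (- y 1) (y k))"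
      by (rule prod.cong) auto
    finally show ?thesis unfolding Qn .
  qed
  have z0: "z \<noteq> 0" unfolding z_def by simp
  have z2: "z ^ 2 \<noteq> 1" unfolding z_def using reg_cexp[OF reg r1] .
  have W0: "z ^ (2 * n) \<noteq> 0" using z0 by simp
  have HW: "z ^ (2 * n) = (1 - bp * z + ap * z ^ 2) / (z ^ 2 - bp * z + ap) * ((1 - bm * z + am * z ^ 2) / (z ^ 2 - bm * z + am)) * G"
    using HB unfolding z_def[symmetric] G_def Bf_def .
  have A: "(1 - bp * z + ap * z ^ 2) / (1 - z ^ 2) * G * inverse (z ^ (2 * n)) * (inverse z + am * z - bm)
       = - ((z ^ 2 - bp * z + ap) / (z ^ 2 - 1) * (z + am * inverse z - bm))"
    by (rule alg1[OF z0 z2 W0 Np[folded z_def] Dp[folded z_def] Nm[folded z_def] Dm[folded z_def] HW])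
  have bt1: "bt ap bp (- y 1) = (1 - bp * z + ap * z ^ 2) / (1 - z ^ 2)" unfolding z_def by (rule bt_neg)
  have bt2: "bt ap bp (y 1) = (z ^ 2 - bp * z + ap) / (z ^ 2 - 1)" unfolding z_def by (rule bt_eq)
  have "Cf ap bp q m (y(1 := - y 1)) * inverse z ^ (2 * n) * (inverse z + am * z - bm)
      = ((1 - bp * z + ap * z ^ 2) / (1 - z ^ 2) * G * inverse (z ^ (2 * n)) * (inverse z + am * z - bm)) * (RB * Q * RP)"
    unfolding Cf_alt B1 P1 bt1 by (simp add: power_inverse mult_ac)
  also have "\<dots> = - ((z ^ 2 - bp * z + ap) / (z ^ 2 - 1) * (z + am * inverse z - bm)) * (RB * Q * RP)"
    unfolding A ..
  also have "\<dots> = - (Cf ap bp q m y * (z + am * inverse z - bm))"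
    unfolding Cf_alt B2 P2 bt2 by (simp add: mult_ac)
  finally show ?thesis unfolding z_def .
qed

lemma swW_invol: "((\<sigma> \<circ> tau p) \<circ> tau p, (\<epsilon> \<circ> tau p) \<circ> tau p) = (\<sigma>, \<epsilon>)"
  by (simp add: fun_eq_iff)

lemma L_exch:
  assumes reg: "reg m \<xi>" and p: "1 \<le> p" "Suc p \<le> m" and la: "la p = la (Suc p)"
  shows "HLR ap bp q m (plusu la (Suc p)) \<xi> = q * HLR ap bp q m (plusu la p) \<xi>"
proof -
  have pm: "p \<in> {1..m}" "Suc p \<in> {1..m}" using p by auto
  define t where "t = (\<lambda>w. Cf ap bp q m (yv \<xi> (fst w) (snd w)) * ph m (yv \<xi> (fst w) (snd w)) la
        * (cexp (yv \<xi> (fst w) (snd w) (Suc p)) - q * cexp (yv \<xi> (fst w) (snd w) p)))"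
  have D: "HLR ap bp q m (plusu la (Suc p)) \<xi> - q * HLR ap bp q m (plusu la p) \<xi> = sum t (WW m)"
    unfolding HLR_eq TT_def ph_plus[OF pm(1)] ph_plus[OF pm(2)] t_def sum_distrib_left sum_subtractf[symmetric]
    by (rule sum.cong) (simp_all add: algebra_simps)
  have Z: "sum t (WW m) = 0"
  proof (rule invol_sum_zero[where g="\<lambda>w. (fst w \<circ> tau p, snd w \<circ> tau p)"])
    fix w assume w: "w \<in> WW m"
    obtain \<sigma> \<epsilon> where we: "w = (\<sigma>, \<epsilon>)" by (cases w)
    show "(fst w \<circ> tau p, snd w \<circ> tau p) \<in> WW m" using swW_in[OF w[unfolded we] p] we by simp
    show "(fst (fst w \<circ> tau p, snd w \<circ> tau p) \<circ> tau p, snd (fst w \<circ> tau p, snd w \<circ> tau p) \<circ> tau p) = w"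
      using we by (simp add: fun_eq_iff)
    define y where "y = yv \<xi> \<sigma> \<epsilon>"
    have ry: "reg m y" unfolding y_def using reg_yv[OF reg w[unfolded we]] .
    have tp: "tau p p = Suc p" "tau p (Suc p) = p" by (simp_all add: Transposition.transpose_def)
    have "t (fst w \<circ> tau p, snd w \<circ> tau p) = Cf ap bp q m (y \<circ> tau p) * ph m (y \<circ> tau p) la
        * (cexp (y p) - q * cexp (y (Suc p)))"
      unfolding t_def we y_def by (simp add: yv_sw tp)
    also have "\<dots> = Cf ap bp q m (y \<circ> tau p) * (cexp (y p) - q * cexp (y (Suc p))) * ph m y la"
      using ph_swap[OF p la] by (simp add: mult_ac)
    also have "\<dots> = - (Cf ap bp q m y * (cexp (y (Suc p)) - q * cexp (y p))) * ph m y la"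
      using Cf_swap[OF ry p] by simp
    also have "\<dots> = - t w" unfolding t_def we y_def by (simp add: mult_ac)
    finally show "t (fst w \<circ> tau p, snd w \<circ> tau p) = - t w" .
  qed
  show ?thesis using D Z by simp
qed

lemma L_b0:
  assumes reg: "reg m \<xi>" and m1: "1 \<le> m" and la: "la m = 0"
  shows "HLR ap bp q m (minusu la m) \<xi> = bp * HLR ap bp q m la \<xi> - ap * HLR ap bp q m (plusu la m) \<xi>"
proof -
  have rm: "m \<in> {1..m}" using m1 by auto
  define t where "t = (\<lambda>w. Cf ap bp q m (yv \<xi> (fst w) (snd w)) * ph m (yv \<xi> (fst w) (snd w)) la
        * (inverse (cexp (yv \<xi> (fst w) (snd w) m)) - bp + ap * cexp (yv \<xi> (fst w) (snd w) m)))"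
  have D: "HLR ap bp q m (minusu la m) \<xi> - bp * HLR ap bp q m la \<xi> + ap * HLR ap bp q m (plusu la m) \<xi> = sum t (WW m)"
    unfolding HLR_eq TT_def ph_plus[OF rm] ph_minus[OF rm] t_def sum_distrib_left sum_subtractf[symmetric]
      sum.distrib[symmetric]
    by (rule sum.cong) (simp_all add: algebra_simps cexp_neg)
  have Z: "sum t (WW m) = 0"
  proof (rule invol_sum_zero[where g="\<lambda>w. (fst w, (snd w)(m := - snd w m))"])
    fix w assume w: "w \<in> WW m"
    obtain \<sigma> \<epsilon> where we: "w = (\<sigma>, \<epsilon>)" by (cases w)
    show "(fst w, (snd w)(m := - snd w m)) \<in> WW m" using flW_in[OF w[unfolded we] rm] we by simp
    show "(fst (fst w, (snd w)(m := - snd w m)), (snd (fst w, (snd w)(m := - snd w m)))(m := - snd (fst w, (snd w)(m := - snd w m)) m)) = w"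
      using we by (simp add: fun_eq_iff)
    define y where "y = yv \<xi> \<sigma> \<epsilon>"
    have ry: "reg m y" unfolding y_def using reg_yv[OF reg w[unfolded we]] .
    have "t (fst w, (snd w)(m := - snd w m)) = Cf ap bp q m (y(m := - y m)) * ph m (y(m := - y m)) la
        * (cexp (y m) - bp + ap * inverse (cexp (y m)))"
      unfolding t_def we y_def by (simp add: yv_fl cexp_neg)
    also have "\<dots> = Cf ap bp q m (y(m := - y m)) * (cexp (y m) - bp + ap * inverse (cexp (y m))) * ph m y la"
      using ph_flip0[where la=la and r=m, OF la] by (simp add: mult_ac)
    also have "\<dots> = - (Cf ap bp q m y * (inverse (cexp (y m)) - bp + ap * cexp (y m))) * ph m y la"
      using Cf_flipm[OF ry m1] by simp
    also have "\<dots> = - t w" unfolding t_def we y_def by (simp add: mult_ac)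
    finally show "t (fst w, (snd w)(m := - snd w m)) = - t w" .
  qed
  have "HLR ap bp q m (minusu la m) \<xi> - bp * HLR ap bp q m la \<xi> + ap * HLR ap bp q m (plusu la m) \<xi> = 0"
    using D Z by simp
  then show ?thesis by (simp add: algebra_simps)
qed

lemma L_bn:
  assumes reg: "reg m \<xi>" and m1: "1 \<le> m" and la: "la 1 = int n"
    and B: "bethe (pp * qp) (pp + qp) (pm * qm) (pm + qm) q n m \<xi>"
    and bnd: "\<bar>pp\<bar> < 1" "\<bar>qp\<bar> < 1" "\<bar>pm\<bar> < 1" "\<bar>qm\<bar> < 1" "\<bar>q\<bar> < 1"
  shows "HLR (pp * qp) (pp + qp) q m (plusu la 1) \<xi> + (pm * qm) * HLR (pp * qp) (pp + qp) q m (minusu la 1) \<xi>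
       = (pm + qm) * HLR (pp * qp) (pp + qp) q m la \<xi>"
proof -
  define ap bp am bm where "ap = pp * qp" and "bp = pp + qp" and "am = pm * qm" and "bm = pm + qm"
  have r1: "1 \<in> {1..m}" using m1 by auto
  define t where "t = (\<lambda>w. Cf ap bp q m (yv \<xi> (fst w) (snd w)) * ph m (yv \<xi> (fst w) (snd w)) la
        * (cexp (yv \<xi> (fst w) (snd w) 1) + am * inverse (cexp (yv \<xi> (fst w) (snd w) 1)) - bm))"
  have D: "HLR ap bp q m (plusu la 1) \<xi> + am * HLR ap bp q m (minusu la 1) \<xi> - bm * HLR ap bp q m la \<xi> = sum t (WW m)"
    unfolding HLR_eq TT_def ph_plus[OF r1] ph_minus[OF r1] t_def sum_distrib_left sum_subtractf[symmetric]
      sum.distrib[symmetric]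
    by (rule sum.cong) (simp_all add: algebra_simps cexp_neg)
  have Z: "sum t (WW m) = 0"
  proof (rule invol_sum_zero[where g="\<lambda>w. (fst w, (snd w)(1 := - snd w 1))"])
    fix w assume w: "w \<in> WW m"
    obtain \<sigma> \<epsilon> where we: "w = (\<sigma>, \<epsilon>)" by (cases w)
    show "(fst w, (snd w)(1 := - snd w 1)) \<in> WW m" using flW_in[OF w[unfolded we] r1] we by simp
    show "(fst (fst w, (snd w)(1 := - snd w 1)), (snd (fst w, (snd w)(1 := - snd w 1)))(1 := - snd (fst w, (snd w)(1 := - snd w 1)) 1)) = w"
      using we by (simp add: fun_eq_iff)
    define y where "y = yv \<xi> \<sigma> \<epsilon>"
    define z where "z = cexp (y 1)"
    have ry: "reg m y" unfolding y_def using reg_yv[OF reg w[unfolded we]] .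
    have nz: "norm z = 1" unfolding z_def by simp
    have HB: "z ^ (2 * n) = Bf ap bp z * Bf am bm z * (\<Prod>k=Suc 1..m. Gam q z (cexp (y k)))"
      using bethe_z[OF B bnd w[unfolded we] m1] Gprod[OF w[unfolded we] m1]
      unfolding z_def y_def ap_def bp_def am_def bm_def by simp
    have Np: "1 - bp * z + ap * z ^ 2 \<noteq> 0" and Dp: "z ^ 2 - bp * z + ap \<noteq> 0"
      unfolding ap_def bp_def using quad_ne[OF nz bnd(1,2)] by auto
    have Nm: "1 - bm * z + am * z ^ 2 \<noteq> 0" and Dm: "z ^ 2 - bm * z + am \<noteq> 0"
      unfolding am_def bm_def using quad_ne[OF nz bnd(3,4)] by auto
    have CF: "Cf ap bp q m (y(1 := - y 1)) * inverse z ^ (2 * n) * (inverse z + am * z - bm)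
       = - (Cf ap bp q m y * (z + am * inverse z - bm))"
      using Cf_flip1[OF ry m1 bnd(5), of bp ap bm am n] Np Dp Nm Dm HB unfolding z_def by blast
    have "t (fst w, (snd w)(1 := - snd w 1)) = Cf ap bp q m (y(1 := - y 1)) * ph m (y(1 := - y 1)) la
        * (inverse z + am * z - bm)"
      unfolding t_def we y_def z_def by (simp add: yv_fl cexp_neg)
    also have "\<dots> = Cf ap bp q m (y(1 := - y 1)) * inverse z ^ (2 * n) * (inverse z + am * z - bm) * ph m y la"
      using ph_flip1[where la=la and n=n and m=m and y=y, OF la m1] unfolding z_def by (simp add: mult_ac)
    also have "\<dots> = - (Cf ap bp q m y * (z + am * inverse z - bm)) * ph m y la"
      using CF by simp
    also have "\<dots> = - t w" unfolding t_def we y_def z_def by (simp add: mult_ac)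
    finally show "t (fst w, (snd w)(1 := - snd w 1)) = - t w" .
  qed
  have "HLR ap bp q m (plusu la 1) \<xi> + am * HLR ap bp q m (minusu la 1) \<xi> - bm * HLR ap bp q m la \<xi> = 0"
    using D Z by simp
  then show ?thesis unfolding ap_def bp_def am_def bm_def by (simp add: algebra_simps)
qed

lemma cexp_cos: "cexp t + cexp (- t) = 2 * complex_of_real (cos t)"
proof -
  have "cos (complex_of_real t) = (cexp t + cexp (- t)) / 2"
    unfolding cos_exp_eq cexp_def by simp
  then show ?thesis by (simp add: cos_of_real mult.commute)
qed

lemma sum_cos_yv:
  assumes W: "(\<sigma>, \<epsilon>) \<in> WW m"
  shows "(\<Sum>l=1..m. cos (yv \<xi> \<sigma> \<epsilon> l)) = (\<Sum>j=1..m. cos (\<xi> j))"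
proof -
  have P: "\<sigma> permutes {1..m}" using WW_D(1)[OF W] .
  have "(\<Sum>l=1..m. cos (yv \<xi> \<sigma> \<epsilon> l)) = (\<Sum>l=1..m. cos (\<xi> (\<sigma> l)))"
  proof (rule sum.cong[OF refl])
    fix l assume "l \<in> {1..m}"
    then have "\<epsilon> l = 1 \<or> \<epsilon> l = -1" using WW_D(2)[OF W] by auto
    then show "cos (yv \<xi> \<sigma> \<epsilon> l) = cos (\<xi> (\<sigma> l))" unfolding yv_def by auto
  qed
  also have "\<dots> = (\<Sum>j=1..m. cos (\<xi> j))"
    using sum.permute[OF P, of "\<lambda>j. cos (\<xi> j)"] by (simp add: comp_def)
  finally show ?thesis .
qed

lemma L_free:
  "(1 - q) * (\<Sum>l=1..m. HLR ap bp q m (plusu la l) \<xi> + HLR ap bp q m (minusu la l) \<xi>)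
   = complex_of_real (2 * (1 - q) * (\<Sum>j=1..m. cos (\<xi> j))) * HLR ap bp q m la \<xi>"
proof -
  have "(\<Sum>l=1..m. HLR ap bp q m (plusu la l) \<xi> + HLR ap bp q m (minusu la l) \<xi>)
      = (\<Sum>l=1..m. \<Sum>w\<in>WW m. TT ap bp q m \<xi> la w * (cexp (yv \<xi> (fst w) (snd w) l) + cexp (- yv \<xi> (fst w) (snd w) l)))"
    unfolding HLR_eq TT_def sum.distrib[symmetric]
    by (rule sum.cong[OF refl], rule sum.cong[OF refl]) (auto simp: ph_plus ph_minus algebra_simps)
  also have "\<dots> = (\<Sum>w\<in>WW m. TT ap bp q m \<xi> la w * (\<Sum>l=1..m. cexp (yv \<xi> (fst w) (snd w) l) + cexp (- yv \<xi> (fst w) (snd w) l)))"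
    unfolding sum_distrib_left by (rule sum.swap)
  also have "\<dots> = (\<Sum>w\<in>WW m. TT ap bp q m \<xi> la w * (2 * complex_of_real (\<Sum>j=1..m. cos (\<xi> j))))"
  proof (rule sum.cong[OF refl])
    fix w assume w: "w \<in> WW m"
    obtain \<sigma> \<epsilon> where we: "w = (\<sigma>, \<epsilon>)" by (cases w)
    have "(\<Sum>l=1..m. cexp (yv \<xi> (fst w) (snd w) l) + cexp (- yv \<xi> (fst w) (snd w) l))
        = 2 * complex_of_real (\<Sum>l=1..m. cos (yv \<xi> \<sigma> \<epsilon> l))"
      unfolding cexp_cos we by (simp add: sum_distrib_left)
    then show "TT ap bp q m \<xi> la w * (\<Sum>l=1..m. cexp (yv \<xi> (fst w) (snd w) l) + cexp (- yv \<xi> (fst w) (snd w) l))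
        = TT ap bp q m \<xi> la w * (2 * complex_of_real (\<Sum>j=1..m. cos (\<xi> j)))"
      using sum_cos_yv[OF w[unfolded we], of \<xi>] by (simp only:)
  qed
  also have "\<dots> = (\<Sum>w\<in>WW m. TT ap bp q m \<xi> la w) * (2 * complex_of_real (\<Sum>j=1..m. cos (\<xi> j)))"
    by (rule sum_distrib_right[symmetric])
  finally have X: "(\<Sum>l=1..m. HLR ap bp q m (plusu la l) \<xi> + HLR ap bp q m (minusu la l) \<xi>)
     = HLR ap bp q m la \<xi> * (2 * complex_of_real (\<Sum>j=1..m. cos (\<xi> j)))" unfolding HLR_eq[of ap bp q m la] .
  show ?thesis unfolding X by (simp add: algebra_simps)
qed

lemma Lam_D:
  assumes "\<mu> \<in> Lam n m"
  shows "\<And>i. i < 1 \<or> n < i \<Longrightarrow> \<mu> i = 0" "\<And>i. i \<in> {1..n} \<Longrightarrow> 0 \<le> \<mu> i"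
    "\<And>i. i \<in> {1..n} \<Longrightarrow> \<mu> i \<le> int m" "\<And>i. i \<in> {1..<n} \<Longrightarrow> \<mu> (Suc i) \<le> \<mu> i"
  using assms unfolding Lam_def by auto

lemma chain_dec:
  fixes f :: "nat \<Rightarrow> int"
  assumes "\<And>i. a \<le> i \<Longrightarrow> i < b \<Longrightarrow> f (Suc i) \<le> f i" "a \<le> x" "x \<le> y" "y \<le> b"
  shows "f y \<le> f x"
  using assms(3,4)
proof (induction y)
  case 0 then show ?case by simp
next
  case (Suc y)
  show ?case
  proof (cases "x = Suc y")
    case False
    then have "x \<le> y" using Suc.prems by simp
    then have "f y \<le> f x" using Suc by simp
    moreover have "f (Suc y) \<le> f y" using assms(1) \<open>x \<le> y\<close> assms(2) Suc.prems by simp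
    ultimately show ?thesis by simp
  qed simp
qed

lemma ext_adj:
  assumes "\<mu> \<in> Lam n m" "i < Suc n"
  shows "ext n m \<mu> (Suc i) \<le> ext n m \<mu> i"
proof -
  consider "i = 0" | "1 \<le> i" "i < n" | "i = n" "1 \<le> n" using assms(2) by linarith
  then show ?thesis
  proof cases
    case 1 then show ?thesis using Lam_D(3)[OF assms(1), of 1] by (cases "n = 0") (auto simp: ext_def)
  next
    case 2 then show ?thesis using Lam_D(4)[OF assms(1), of i] by (auto simp: ext_def)
  next
    case 3 then show ?thesis using Lam_D(2)[OF assms(1), of n] by (auto simp: ext_def)
  qed
qed

lemma ext_mono:
  assumes "\<mu> \<in> Lam n m" "i \<le> j" "j \<le> Suc n"
  shows "ext n m \<mu> j \<le> ext n m \<mu> i"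
  by (rule chain_dec[of 0 "Suc n"]) (use assms ext_adj in auto)

lemma ext_bounds:
  assumes "\<mu> \<in> Lam n m" "i \<le> Suc n"
  shows "0 \<le> ext n m \<mu> i" "ext n m \<mu> i \<le> int m"
proof -
  have "ext n m \<mu> (Suc n) \<le> ext n m \<mu> i" using ext_mono[OF assms(1) assms(2)] by simp
  then show "0 \<le> ext n m \<mu> i" by (simp add: ext_def)
  have "ext n m \<mu> i \<le> ext n m \<mu> 0" using ext_mono[OF assms(1) _ assms(2)] by simp
  then show "ext n m \<mu> i \<le> int m" by (simp add: ext_def)
qed

lemma ext_in: "i \<in> {1..n} \<Longrightarrow> ext n m \<mu> i = \<mu> i"
  by (auto simp: ext_def)

lemma downclosed:
  fixes S :: "nat set"
  assumes "S \<subseteq> {1..N}" "\<And>x y. x \<in> S \<Longrightarrow> 1 \<le> y \<Longrightarrow> y \<le> x \<Longrightarrow> y \<in> S"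
  shows "x \<in> S \<longleftrightarrow> 1 \<le> x \<and> x \<le> card S"
proof -
  have fS: "finite S" using assms(1) finite_subset by blast
  show ?thesis
  proof
    assume x: "x \<in> S"
    have "{1..x} \<subseteq> S" using assms(2)[OF x] by auto
    then have "card {1..x} \<le> card S" using card_mono[OF fS] by blast
    then show "1 \<le> x \<and> x \<le> card S" using x assms(1) by auto
  next
    assume x: "1 \<le> x \<and> x \<le> card S"
    show "x \<in> S"
    proof (rule ccontr)
      assume nx: "x \<notin> S"
      have "S \<subseteq> {1..<x}"
      proof
        fix y assume y: "y \<in> S"
        have "y < x"
        proof (rule ccontr)
          assume "\<not> y < x"
          then have "x \<in> S" using assms(2)[OF y] x by auto
          then show False using nx by simp
        qed
        then show "y \<in> {1..<x}" using y assms(1) by auto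
      qed
      then have "card S \<le> card {1..<x}" by (rule card_mono[rotated]) simp
      then have "card S \<le> x - 1" by simp
      then show False using x by linarith
    qed
  qed
qed

definition cj :: "nat \<Rightarrow> nat \<Rightarrow> (nat \<Rightarrow> int) \<Rightarrow> nat \<Rightarrow> int" where
  "cj n m \<mu> l = (if l \<in> {1..m} then int (card {v\<in>{1..n}. int l \<le> \<mu> v}) else 0)"

lemma cj_GE:
  assumes mu: "\<mu> \<in> Lam n m" and l: "l \<in> {1..m}" and i: "i \<le> Suc n"
  shows "int i \<le> cj n m \<mu> l \<longleftrightarrow> int l \<le> ext n m \<mu> i"
proof -
  define S where "S = {v\<in>{1..n}. int l \<le> \<mu> v}"
  have Ssub: "S \<subseteq> {1..n}" unfolding S_def by auto
  have cS: "card S \<le> n" using card_mono[OF _ Ssub] by simp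
  have dc: "\<And>x y. x \<in> S \<Longrightarrow> 1 \<le> y \<Longrightarrow> y \<le> x \<Longrightarrow> y \<in> S"
  proof -
    fix x y assume x: "x \<in> S" and y: "1 \<le> y" "y \<le> x"
    have "ext n m \<mu> x \<le> ext n m \<mu> y" using ext_mono[OF mu y(2)] x unfolding S_def by auto
    then show "y \<in> S" using x y unfolding S_def by (auto simp: ext_in)
  qed
  have cj: "cj n m \<mu> l = int (card S)" unfolding cj_def S_def using l by simp
  consider "i = 0" | "i = Suc n" | "i \<in> {1..n}" using i by force
  then show ?thesis
  proof cases
    case 1 then show ?thesis using l by (simp add: cj ext_def)
  next
    case 2 then show ?thesis using l cS by (simp add: cj ext_def)
  next
    case 3
    have "int i \<le> cj n m \<mu> l \<longleftrightarrow> i \<in> S" using downclosed[OF Ssub dc, where x=i] 3 by (simp add: cj)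
    also have "\<dots> \<longleftrightarrow> int l \<le> ext n m \<mu> i" unfolding S_def using 3 by (simp add: ext_in)
    finally show ?thesis .
  qed
qed

lemma cj_cluster:
  assumes mu: "\<mu> \<in> Lam n m" and v: "v \<le> n" and l: "ext n m \<mu> (Suc v) < int l" "int l \<le> ext n m \<mu> v"
  shows "cj n m \<mu> l = int v"
proof -
  have lm: "l \<in> {1..m}" using l ext_bounds[OF mu, of v] ext_bounds[OF mu, of "Suc v"] v by auto
  have "int v \<le> cj n m \<mu> l" using cj_GE[OF mu lm, of v] v l by simp
  moreover have "\<not> int (Suc v) \<le> cj n m \<mu> l" using cj_GE[OF mu lm, of "Suc v"] v l by simp
  ultimately show ?thesis by simp
qed

lemma cj_Lam:
  assumes mu: "\<mu> \<in> Lam n m"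
  shows "cj n m \<mu> \<in> Lam m n"
proof -
  have A: "\<forall>i. (i < 1 \<or> m < i) \<longrightarrow> cj n m \<mu> i = 0" by (auto simp: cj_def)
  have B: "\<forall>i\<in>{1..m}. 0 \<le> cj n m \<mu> i \<and> cj n m \<mu> i \<le> int n"
  proof
    fix i assume "i \<in> {1..m}"
    have "card {v\<in>{1..n}. int i \<le> \<mu> v} \<le> card {1..n}" by (rule card_mono) auto
    then show "0 \<le> cj n m \<mu> i \<and> cj n m \<mu> i \<le> int n" by (simp add: cj_def)
  qed
  have C: "\<forall>i\<in>{1..<m}. cj n m \<mu> (Suc i) \<le> cj n m \<mu> i"
  proof
    fix i assume i: "i \<in> {1..<m}"
    have "card {v\<in>{1..n}. int (Suc i) \<le> \<mu> v} \<le> card {v\<in>{1..n}. int i \<le> \<mu> v}" by (rule card_mono) auto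
    then show "cj n m \<mu> (Suc i) \<le> cj n m \<mu> i" using i by (simp add: cj_def)
  qed
  show ?thesis unfolding Lam_def using A B C by blast
qed

lemma card_int_ivl:
  fixes a b :: int
  assumes "0 \<le> b" "b \<le> a" "a \<le> int m"
  shows "int (card {j\<in>{1..m}. int j \<le> a \<and> \<not> int j \<le> b}) = a - b"
proof -
  have "{j\<in>{1..m}. int j \<le> a \<and> \<not> int j \<le> b} = {Suc (nat b)..nat a}" using assms by auto
  then show ?thesis using assms by simp
qed

lemma cj_count:
  assumes mu: "\<mu> \<in> Lam n m" and i: "i \<in> {0..n}"
  shows "int (card {j\<in>{1..m}. cj n m \<mu> j = int i}) = ext n m \<mu> i - ext n m \<mu> (Suc i)"
proof -
  have "{j\<in>{1..m}. cj n m \<mu> j = int i} = {j\<in>{1..m}. int j \<le> ext n m \<mu> i \<and> \<not> int j \<le> ext n m \<mu> (Suc i)}"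
  proof (rule Collect_cong)
    fix j
    show "(j \<in> {1..m} \<and> cj n m \<mu> j = int i) = (j \<in> {1..m} \<and> int j \<le> ext n m \<mu> i \<and> \<not> int j \<le> ext n m \<mu> (Suc i))"
    proof (cases "j \<in> {1..m}")
      case True
      have "cj n m \<mu> j = int i \<longleftrightarrow> int i \<le> cj n m \<mu> j \<and> \<not> int (Suc i) \<le> cj n m \<mu> j" by auto
      then show ?thesis using cj_GE[OF mu True, of i] cj_GE[OF mu True, of "Suc i"] i True by auto
    qed auto
  qed
  then show ?thesis
    using card_int_ivl[OF ext_bounds(1)[OF mu, of "Suc i"] ext_mono[OF mu, of i "Suc i"] ext_bounds(2)[OF mu, of i]] i
    by simp
qed

lemma la_eq_cj:
  assumes mu: "\<mu> \<in> Lam n m" and la: "la \<in> Lam m n"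
    and cnt: "\<forall>i\<in>{0..n}. int (card {j\<in>{1..m}. la j = int i}) = ext n m \<mu> i - ext n m \<mu> (Suc i)"
  shows "la = cj n m \<mu>"
proof -
  define c where "c i = card {j\<in>{1..m}. int i \<le> la j}" for i
  have laB: "\<And>j. j \<in> {1..m} \<Longrightarrow> 0 \<le> la j \<and> la j \<le> int n" using la unfolding Lam_def by auto
  have la0': "\<forall>i. (i < 1 \<or> m < i) \<longrightarrow> la i = 0" using la unfolding Lam_def by blast
  have la0: "\<And>j. j \<notin> {1..m} \<Longrightarrow> la j = 0"
  proof -
    fix j assume "j \<notin> {1..m}"
    then have "j < 1 \<or> m < j" by auto
    then show "la j = 0" using la0' by blast
  qed
  have C: "\<And>d. d \<le> Suc n \<Longrightarrow> int (c (Suc n - d)) = ext n m \<mu> (Suc n - d)"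
  proof -
    fix d show "d \<le> Suc n \<Longrightarrow> int (c (Suc n - d)) = ext n m \<mu> (Suc n - d)"
    proof (induction d)
      case 0
      have "{j\<in>{1..m}. int (Suc n) \<le> la j} = {}" using laB by force
      then show ?case by (simp add: c_def ext_def)
    next
      case (Suc d)
      define i where "i = n - d"
      have i1: "Suc n - Suc d = i" "Suc n - d = Suc i" using Suc.prems unfolding i_def by auto
      have "{j\<in>{1..m}. int i \<le> la j} = {j\<in>{1..m}. int (Suc i) \<le> la j} \<union> {j\<in>{1..m}. la j = int i}" by auto
      then have "c i = c (Suc i) + card {j\<in>{1..m}. la j = int i}"
        unfolding c_def by (subst card_Un_disjoint[symmetric]) auto
      moreover have "int (card {j\<in>{1..m}. la j = int i}) = ext n m \<mu> i - ext n m \<mu> (Suc i)"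
        using cnt i_def by auto
      moreover have "int (c (Suc i)) = ext n m \<mu> (Suc i)" using Suc i1 by simp
      ultimately show ?case unfolding i1 by simp
    qed
  qed
  have GE: "\<And>i j. i \<le> Suc n \<Longrightarrow> j \<in> {1..m} \<Longrightarrow> int i \<le> la j \<longleftrightarrow> int j \<le> ext n m \<mu> i"
  proof -
    fix i j assume i: "i \<le> Suc n" and j: "j \<in> {1..m}"
    define T where "T = {j\<in>{1..m}. int i \<le> la j}"
    have Tsub: "T \<subseteq> {1..m}" unfolding T_def by auto
    have dc: "\<And>x y. x \<in> T \<Longrightarrow> 1 \<le> y \<Longrightarrow> y \<le> x \<Longrightarrow> y \<in> T"
    proof -
      fix x y assume x: "x \<in> T" and y: "1 \<le> y" "y \<le> x"
      have "la x \<le> la y"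
        by (rule chain_dec[of 1 m]) (use la x y in \<open>auto simp: Lam_def T_def\<close>)
      then show "y \<in> T" using x y unfolding T_def by auto
    qed
    have ci: "int (c i) = ext n m \<mu> i" using C[of "Suc n - i"] i by simp
    have "int i \<le> la j \<longleftrightarrow> j \<in> T" using j unfolding T_def by simp
    also have "\<dots> \<longleftrightarrow> j \<le> card T" using downclosed[OF Tsub dc, where x=j] j by simp
    also have "\<dots> \<longleftrightarrow> int j \<le> ext n m \<mu> i" using ci unfolding T_def c_def by linarith
    finally show "int i \<le> la j \<longleftrightarrow> int j \<le> ext n m \<mu> i" .
  qed
  show ?thesis
  proof
    fix j
    show "la j = cj n m \<mu> j"
    proof (cases "j \<in> {1..m}")
      case False then show ?thesis using la0[OF False] unfolding cj_def by auto
    next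
      case True
      have "{v\<in>{1..n}. int j \<le> \<mu> v} = {v\<in>{1..n}. int v \<le> la j}"
        using GE[OF _ True] by (auto simp: ext_in)
      also have "\<dots> = {1..nat (la j)}" using laB[OF True] by auto
      finally show ?thesis using True laB[OF True] by (simp add: cj_def)
    qed
  qed
qed

lemma conjp_eq:
  assumes mu: "\<mu> \<in> Lam n m"
  shows "conjp n m \<mu> = cj n m \<mu>"
  unfolding conjp_def
proof (rule the_equality)
  show "cj n m \<mu> \<in> Lam m n \<and> (\<forall>i\<in>{0..n}. int (card {j\<in>{1..m}. cj n m \<mu> j = int i}) = ext n m \<mu> i - ext n m \<mu> (Suc i))"
    using cj_Lam[OF mu] cj_count[OF mu] by blast
next
  fix la assume "la \<in> Lam m n \<and> (\<forall>i\<in>{0..n}. int (card {j\<in>{1..m}. la j = int i}) = ext n m \<mu> i - ext n m \<mu> (Suc i))"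
  then show "la = cj n m \<mu>" using la_eq_cj[OF mu] by blast
qed

lemma cj_plus:
  assumes i: "i \<in> {1..n}" and b: "0 \<le> \<mu> i" "\<mu> i + 1 \<le> int m"
  shows "cj n m (plusu \<mu> i) = plusu (cj n m \<mu>) (nat (\<mu> i) + 1)"
proof
  fix l
  define a where "a = nat (\<mu> i) + 1"
  have a: "a \<in> {1..m}" unfolding a_def using b by auto
  show "cj n m (plusu \<mu> i) l = plusu (cj n m \<mu>) (nat (\<mu> i) + 1) l"
  proof (cases "l \<in> {1..m}")
    case False
    then have "l \<noteq> a" using a by auto
    then show ?thesis using False unfolding cj_def plusu_def a_def by auto
  next
    case True
    define S where "S = {v\<in>{1..n}. int l \<le> \<mu> v}"
    have fS: "finite S" unfolding S_def by auto
    show ?thesis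
    proof (cases "l = a")
      case True
      have "{v\<in>{1..n}. int l \<le> plusu \<mu> i v} = insert i S"
        using True i b unfolding S_def plusu_def a_def by auto
      moreover have "i \<notin> S" using True b unfolding S_def a_def by auto
      ultimately show ?thesis using \<open>l \<in> {1..m}\<close> True fS unfolding cj_def plusu_def a_def S_def by simp
    next
      case False
      have "{v\<in>{1..n}. int l \<le> plusu \<mu> i v} = S"
        using False b unfolding S_def plusu_def a_def by auto
      then show ?thesis using \<open>l \<in> {1..m}\<close> False unfolding cj_def plusu_def a_def S_def by simp
    qed
  qed
qed

lemma cj_minus:
  assumes i: "i \<in> {1..n}" and b: "1 \<le> \<mu> i" "\<mu> i \<le> int m"
  shows "cj n m (minusu \<mu> i) = minusu (cj n m \<mu>) (nat (\<mu> i))"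
proof
  fix l
  define a where "a = nat (\<mu> i)"
  have a: "a \<in> {1..m}" unfolding a_def using b by auto
  show "cj n m (minusu \<mu> i) l = minusu (cj n m \<mu>) (nat (\<mu> i)) l"
  proof (cases "l \<in> {1..m}")
    case False
    then have "l \<noteq> a" using a by auto
    then show ?thesis using False unfolding cj_def minusu_def a_def by auto
  next
    case True
    define S where "S = {v\<in>{1..n}. int l \<le> \<mu> v}"
    have fS: "finite S" unfolding S_def by auto
    show ?thesis
    proof (cases "l = a")
      case True
      have "{v\<in>{1..n}. int l \<le> minusu \<mu> i v} = S - {i}"
        using True i b unfolding S_def minusu_def a_def by auto
      moreover have iS: "i \<in> S" using True b i unfolding S_def a_def by auto
      ultimately have c: "card {v\<in>{1..n}. int l \<le> minusu \<mu> i v} = card S - 1" using fS by simp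
      have "0 < card S" using iS fS card_gt_0_iff by blast
      then have c1: "1 \<le> card S" by simp
      have "cj n m (minusu \<mu> i) l = int (card S) - 1"
        using \<open>l \<in> {1..m}\<close> c c1 unfolding cj_def by simp
      then show ?thesis using \<open>l \<in> {1..m}\<close> True unfolding cj_def minusu_def a_def S_def by simp
    next
      case False
      have "{v\<in>{1..n}. int l \<le> minusu \<mu> i v} = S"
        using False b unfolding S_def minusu_def a_def by auto
      then show ?thesis using \<open>l \<in> {1..m}\<close> False unfolding cj_def minusu_def a_def S_def by simp
    qed
  qed
qed

lemma valid_plus:
  assumes mu: "\<mu> \<in> Lam n m" and i: "i \<in> {1..n}" and lt: "ext n m \<mu> i < ext n m \<mu> (i - 1)"
  shows "plusu \<mu> i \<in> Lam n m"
proof -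
  have e1: "ext n m \<mu> (i - 1) \<le> int m" using ext_bounds(2)[OF mu, of "i - 1"] i by auto
  have ei: "ext n m \<mu> i = \<mu> i" using i by (simp add: ext_in)
  have A: "\<forall>k. (k < 1 \<or> n < k) \<longrightarrow> plusu \<mu> i k = 0" using Lam_D(1)[OF mu] i by (auto simp: plusu_def)
  have B: "\<forall>k\<in>{1..n}. 0 \<le> plusu \<mu> i k \<and> plusu \<mu> i k \<le> int m"
    using Lam_D(2,3)[OF mu] lt e1 ei by (auto simp: plusu_def)
  have C: "\<forall>k\<in>{1..<n}. plusu \<mu> i (Suc k) \<le> plusu \<mu> i k"
  proof
    fix k assume k: "k \<in> {1..<n}"
    show "plusu \<mu> i (Suc k) \<le> plusu \<mu> i k"
    proof (cases "Suc k = i")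
      case True
      then have "ext n m \<mu> (i - 1) = \<mu> k" using k by (auto simp: ext_def)
      then show ?thesis using True lt ei by (auto simp: plusu_def)
    next
      case False
      then show ?thesis using Lam_D(4)[OF mu k] by (auto simp: plusu_def)
    qed
  qed
  show ?thesis unfolding Lam_def using A B C by blast
qed

lemma valid_minus:
  assumes mu: "\<mu> \<in> Lam n m" and i: "i \<in> {1..n}" and lt: "ext n m \<mu> (Suc i) < ext n m \<mu> i"
  shows "minusu \<mu> i \<in> Lam n m"
proof -
  have e1: "0 \<le> ext n m \<mu> (Suc i)" using ext_bounds(1)[OF mu, of "Suc i"] i by auto
  have ei: "ext n m \<mu> i = \<mu> i" using i by (simp add: ext_in)
  have A: "\<forall>k. (k < 1 \<or> n < k) \<longrightarrow> minusu \<mu> i k = 0" using Lam_D(1)[OF mu] i by (auto simp: minusu_def)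
  have B: "\<forall>k\<in>{1..n}. 0 \<le> minusu \<mu> i k \<and> minusu \<mu> i k \<le> int m"
    using Lam_D(2,3)[OF mu] Lam_D(3)[OF mu i] lt e1 ei by (auto simp: minusu_def)
  have C: "\<forall>k\<in>{1..<n}. minusu \<mu> i (Suc k) \<le> minusu \<mu> i k"
  proof
    fix k assume k: "k \<in> {1..<n}"
    show "minusu \<mu> i (Suc k) \<le> minusu \<mu> i k"
    proof (cases "k = i")
      case True
      then have "ext n m \<mu> (Suc i) = \<mu> (Suc k)" using k by (auto simp: ext_def)
      then show ?thesis using True lt ei by (auto simp: minusu_def)
    next
      case False
      then show ?thesis using Lam_D(4)[OF mu k] by (auto simp: minusu_def)
    qed
  qed
  show ?thesis unfolding Lam_def using A B C by blast
qed

lemma geo_up: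
  fixes h :: "nat \<Rightarrow> complex"
  assumes H: "\<And>l. A \<le> l \<Longrightarrow> Suc l < B \<Longrightarrow> h (Suc l) = c * h l"
  shows "A + d < B \<Longrightarrow> h (A + d) = c ^ d * h A"
proof (induction d)
  case (Suc d)
  then have "h (A + Suc d) = c * h (A + d)" using H[of "A + d"] by simp
  then show ?case using Suc by simp
qed simp

lemma sum_up:
  fixes h :: "nat \<Rightarrow> complex"
  assumes H: "\<And>l. A \<le> l \<Longrightarrow> Suc l < B \<Longrightarrow> h (Suc l) = c * h l"
  shows "A + d \<le> B \<Longrightarrow> (1 - c) * (\<Sum>l\<in>{A..<A + d}. h l) = (1 - c ^ d) * h A"
proof (induction d)
  case (Suc d)
  have "(\<Sum>l\<in>{A..<A + Suc d}. h l) = (\<Sum>l\<in>{A..<A + d}. h l) + h (A + d)" by simp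
  moreover have "h (A + d) = c ^ d * h A" using geo_up[where h=h and A=A and B=B and c=c, OF H, of d] Suc.prems by simp
  ultimately have S: "(\<Sum>l\<in>{A..<A + Suc d}. h l) = (\<Sum>l\<in>{A..<A + d}. h l) + c ^ d * h A" by simp
  have IH: "(1 - c) * (\<Sum>l\<in>{A..<A + d}. h l) = (1 - c ^ d) * h A" using Suc by simp
  have "(1 - c) * (\<Sum>l\<in>{A..<A + Suc d}. h l) = (1 - c) * (\<Sum>l\<in>{A..<A + d}. h l) + (1 - c) * (c ^ d * h A)"
    by (simp only: S distrib_left)
  also have "\<dots> = (1 - c ^ Suc d) * h A" unfolding IH by (simp add: algebra_simps)
  finally show ?case .
qed simp

lemma geo_dn:
  fixes h :: "nat \<Rightarrow> complex"
  assumes H: "\<And>l. A \<le> l \<Longrightarrow> Suc l < B \<Longrightarrow> h l = c * h (Suc l)"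
  shows "d < B - A \<Longrightarrow> h (B - 1 - d) = c ^ d * h (B - 1)"
proof (induction d)
  case (Suc d)
  have e: "Suc (B - 1 - Suc d) = B - 1 - d" using Suc.prems by auto
  have "h (B - 1 - Suc d) = c * h (B - 1 - d)" using H[of "B - 1 - Suc d"] Suc.prems e by simp
  then show ?case using Suc by simp
qed simp

lemma sum_dn:
  fixes h :: "nat \<Rightarrow> complex"
  assumes H: "\<And>l. A \<le> l \<Longrightarrow> Suc l < B \<Longrightarrow> h l = c * h (Suc l)" and AB: "A \<le> B"
  shows "(1 - c) * (\<Sum>l\<in>{A..<B}. h l) = (1 - c ^ (B - A)) * h (B - 1)"
proof -
  have "\<And>d. d \<le> B - A \<Longrightarrow> (1 - c) * (\<Sum>l\<in>{B - d..<B}. h l) = (1 - c ^ d) * h (B - 1)"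
  proof -
    fix d show "d \<le> B - A \<Longrightarrow> (1 - c) * (\<Sum>l\<in>{B - d..<B}. h l) = (1 - c ^ d) * h (B - 1)"
    proof (induction d)
      case (Suc d)
      have s: "{B - Suc d..<B} = insert (B - 1 - d) {B - d..<B}" using Suc.prems by auto
      have "(\<Sum>l\<in>{B - Suc d..<B}. h l) = h (B - 1 - d) + (\<Sum>l\<in>{B - d..<B}. h l)"
        unfolding s using Suc.prems by (subst sum.insert) auto
      moreover have "h (B - 1 - d) = c ^ d * h (B - 1)" using geo_dn[where h=h and A=A and B=B and c=c, OF H, of d] Suc.prems by simp
      ultimately have S: "(\<Sum>l\<in>{B - Suc d..<B}. h l) = (\<Sum>l\<in>{B - d..<B}. h l) + c ^ d * h (B - 1)" by simp
      have IH: "(1 - c) * (\<Sum>l\<in>{B - d..<B}. h l) = (1 - c ^ d) * h (B - 1)" using Suc by simp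
      have "(1 - c) * (\<Sum>l\<in>{B - Suc d..<B}. h l) = (1 - c) * (\<Sum>l\<in>{B - d..<B}. h l) + (1 - c) * (c ^ d * h (B - 1))"
        by (simp only: S distrib_left)
      also have "\<dots> = (1 - c ^ Suc d) * h (B - 1)" unfolding IH by (simp add: algebra_simps)
      finally show ?case .
    qed simp
  qed
  from this[of "B - A"] show ?thesis using AB by simp
qed

lemma telescope:
  fixes f :: "nat \<Rightarrow> nat" and g :: "nat \<Rightarrow> complex"
  assumes "\<And>v. v \<le> N \<Longrightarrow> f (Suc v) \<le> f v"
  shows "(\<Sum>v=0..N. \<Sum>l\<in>{f (Suc v)..<f v}. g l) = (\<Sum>l\<in>{f (Suc N)..<f 0}. g l)"
  using assms
proof (induction N)
  case 0 then show ?case by simp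
next
  case (Suc N)
  have IH: "(\<Sum>v=0..N. \<Sum>l\<in>{f (Suc v)..<f v}. g l) = (\<Sum>l\<in>{f (Suc N)..<f 0}. g l)" using Suc by simp
  have m: "f (Suc N) \<le> f 0"
  proof -
    have "\<And>k. k \<le> N \<Longrightarrow> f (Suc k) \<le> f 0"
    proof -
      fix k show "k \<le> N \<Longrightarrow> f (Suc k) \<le> f 0"
      proof (induction k)
        case 0 then show ?case using Suc.prems[of 0] by simp
      next
        case (Suc k)
        have "f (Suc (Suc k)) \<le> f (Suc k)" using Suc.prems \<open>\<And>v. v \<le> Suc N \<Longrightarrow> f (Suc v) \<le> f v\<close>[of "Suc k"] by simp
        then show ?case using Suc by simp
      qed
    qed
    then show ?thesis by simp
  qed
  have "(\<Sum>v=0..Suc N. \<Sum>l\<in>{f (Suc v)..<f v}. g l)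
      = (\<Sum>l\<in>{f (Suc N)..<f 0}. g l) + (\<Sum>l\<in>{f (Suc (Suc N))..<f (Suc N)}. g l)"
    using IH by simp
  also have "\<dots> = (\<Sum>l\<in>{f (Suc (Suc N))..<f 0}. g l)"
    using sum.atLeastLessThan_concat[of "f (Suc (Suc N))" "f (Suc N)" "f 0" g] Suc.prems m by (simp add: add.commute)
  finally show ?case .
qed

lemma main_mu:
  fixes m n :: nat and q pp qp pm qm :: real and \<xi> :: "nat \<Rightarrow> real"
  assumes n1: "1 \<le> n"
    and q1: "-1 < q" "q < 1"
    and bnd: "\<bar>pp\<bar> < 1" "\<bar>qp\<bar> < 1" "\<bar>pm\<bar> < 1" "\<bar>qm\<bar> < 1"
    and reg: "reg m \<xi>"
    and B: "bethe (pp * qp) (pp + qp) (pm * qm) (pm + qm) q n m \<xi>"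
    and mu: "\<mu> \<in> Lam n m"
  shows "Ham (pp * qp) (pp + qp) (pm * qm) (pm + qm) q n m
               (\<lambda>\<nu>. HLR (pp * qp) (pp + qp) q m (conjp n m \<nu>) \<xi>) \<mu>
         = complex_of_real (2 * (1 - q) * (\<Sum>j=1..m. cos (\<xi> j)))
           * HLR (pp * qp) (pp + qp) q m (conjp n m \<mu>) \<xi>"
proof -
  have qb: "\<bar>q\<bar> < 1" using q1 by auto
  define F where "F la = HLR (pp * qp) (pp + qp) q m la \<xi>" for la
  define lam where "lam = cj n m \<mu>"
  define e where "e v = ext n m \<mu> v" for v
  define M where "M v = nat (e v)" for v
  define k where "k v = M v - M (Suc v)" for v
  define U where "U v = F (plusu lam (Suc (M (Suc v))))" for v
  define L where "L v = F (minusu lam (M v))" for v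
  define Q where "Q = complex_of_real q"
  have M0: "M 0 = m" "M (Suc n) = 0" unfolding M_def e_def ext_def by auto
  have ecast: "\<And>v. v \<le> Suc n \<Longrightarrow> int (M v) = e v"
    unfolding M_def e_def using ext_bounds(1)[OF mu] by simp
  have Mmono: "\<And>v. v \<le> n \<Longrightarrow> M (Suc v) \<le> M v"
    unfolding M_def e_def using ext_adj[OF mu] by (simp add: nat_mono)
  have Mle: "\<And>v. v \<le> Suc n \<Longrightarrow> M v \<le> m"
    unfolding M_def e_def using ext_bounds(2)[OF mu] by (simp add: nat_le_iff)
  have CL: "\<And>v l. v \<le> n \<Longrightarrow> M (Suc v) < l \<Longrightarrow> l \<le> M v \<Longrightarrow> lam l = int v"
  proof -
    fix v l assume v: "v \<le> n" and l: "M (Suc v) < l" "l \<le> M v"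
    have "ext n m \<mu> (Suc v) < int l" "int l \<le> ext n m \<mu> v"
      using l ecast[of v] ecast[of "Suc v"] v unfolding e_def by auto
    then show "lam l = int v" unfolding lam_def using cj_cluster[OF mu v] by blast
  qed
  have Fconj: "HLR (pp * qp) (pp + qp) q m (conjp n m \<mu>) \<xi> = F lam"
    unfolding F_def lam_def conjp_eq[OF mu] ..
  have EXU: "\<And>v l. v \<le> n \<Longrightarrow> M (Suc v) \<le> l \<Longrightarrow> Suc l < M v \<Longrightarrow>
      F (plusu lam (Suc (Suc l))) = Q * F (plusu lam (Suc l))"
  proof -
    fix v l assume v: "v \<le> n" and l: "M (Suc v) \<le> l" "Suc l < M v"
    have "lam (Suc l) = lam (Suc (Suc l))" using CL[OF v, of "Suc l"] CL[OF v, of "Suc (Suc l)"] l by simp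
    moreover have "Suc (Suc l) \<le> m" using l Mle[of v] v by simp
    ultimately show "F (plusu lam (Suc (Suc l))) = Q * F (plusu lam (Suc l))"
      unfolding F_def Q_def using L_exch[OF reg, of "Suc l" lam] by simp
  qed
  have EXD: "\<And>v l. v \<le> n \<Longrightarrow> M (Suc v) \<le> l \<Longrightarrow> Suc l < M v \<Longrightarrow>
      F (minusu lam (Suc l)) = Q * F (minusu lam (Suc (Suc l)))"
  proof -
    fix v l assume v: "v \<le> n" and l: "M (Suc v) \<le> l" "Suc l < M v"
    define nu where "nu = minusu (minusu lam (Suc l)) (Suc (Suc l))"
    have "lam (Suc l) = lam (Suc (Suc l))" using CL[OF v, of "Suc l"] CL[OF v, of "Suc (Suc l)"] l by simp
    then have eq: "nu (Suc l) = nu (Suc (Suc l))" unfolding nu_def minusu_def by simp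
    have sm: "Suc (Suc l) \<le> m" using l Mle[of v] v by simp
    have p1: "plusu nu (Suc (Suc l)) = minusu lam (Suc l)" unfolding nu_def plusu_def minusu_def by (simp add: fun_eq_iff)
    have p2: "plusu nu (Suc l) = minusu lam (Suc (Suc l))" unfolding nu_def plusu_def minusu_def by (simp add: fun_eq_iff)
    show "F (minusu lam (Suc l)) = Q * F (minusu lam (Suc (Suc l)))"
      using L_exch[OF reg _ sm eq] unfolding F_def Q_def p1 p2 by simp
  qed
  have CS: "\<And>v. v \<le> n \<Longrightarrow> (1 - Q) * (\<Sum>l\<in>{M (Suc v)..<M v}. F (plusu lam (Suc l)) + F (minusu lam (Suc l)))
      = (1 - Q ^ k v) * U v + (1 - Q ^ k v) * L v"
  proof -
    fix v assume v: "v \<le> n"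
    have AB: "M (Suc v) \<le> M v" using Mmono[OF v] .
    have s1: "(1 - Q) * (\<Sum>l\<in>{M (Suc v)..<M (Suc v) + k v}. F (plusu lam (Suc l))) = (1 - Q ^ k v) * U v"
      unfolding U_def using sum_up[where h="\<lambda>l. F (plusu lam (Suc l))" and A="M (Suc v)" and B="M v" and c=Q and d="k v"]
        EXU[OF v] AB unfolding k_def by simp
    have s2: "(1 - Q) * (\<Sum>l\<in>{M (Suc v)..<M v}. F (minusu lam (Suc l))) = (1 - Q ^ k v) * F (minusu lam (Suc (M v - 1)))"
      using sum_dn[where h="\<lambda>l. F (minusu lam (Suc l))" and A="M (Suc v)" and B="M v" and c=Q] EXD[OF v] AB
      unfolding k_def by simp
    have s3: "(1 - Q ^ k v) * F (minusu lam (Suc (M v - 1))) = (1 - Q ^ k v) * L v"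
    proof (cases "k v = 0")
      case False then have "Suc (M v - 1) = M v" unfolding k_def by simp
      then show ?thesis unfolding L_def by simp
    qed simp
    have e1: "M (Suc v) + k v = M v" unfolding k_def using AB by simp
    show "(1 - Q) * (\<Sum>l\<in>{M (Suc v)..<M v}. F (plusu lam (Suc l)) + F (minusu lam (Suc l)))
      = (1 - Q ^ k v) * U v + (1 - Q ^ k v) * L v"
      using s1 s2 s3 unfolding e1 sum.distrib distrib_left by simp
  qed
  have FREE: "complex_of_real (2 * (1 - q) * (\<Sum>j=1..m. cos (\<xi> j))) * F lam
      = (\<Sum>v=0..n. (1 - Q ^ k v) * U v + (1 - Q ^ k v) * L v)"
  proof -
    have "complex_of_real (2 * (1 - q) * (\<Sum>j=1..m. cos (\<xi> j))) * F lam
        = (1 - Q) * (\<Sum>l=1..m. F (plusu lam l) + F (minusu lam l))"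
      unfolding F_def Q_def using L_free[where q=q and m=m and ap="pp * qp" and bp="pp + qp" and la=lam and \<xi>=\<xi>] by simp
    also have "(\<Sum>l=1..m. F (plusu lam l) + F (minusu lam l)) = (\<Sum>l\<in>{0..<m}. F (plusu lam (Suc l)) + F (minusu lam (Suc l)))"
      by (simp add: sum.atLeast1_atMost_eq atLeast0LessThan)
    also have "\<dots> = (\<Sum>v=0..n. \<Sum>l\<in>{M (Suc v)..<M v}. F (plusu lam (Suc l)) + F (minusu lam (Suc l)))"
      using telescope[of n M "\<lambda>l. F (plusu lam (Suc l)) + F (minusu lam (Suc l))"] Mmono M0 by simp
    also have "(1 - Q) * \<dots> = (\<Sum>v=0..n. (1 - Q) * (\<Sum>l\<in>{M (Suc v)..<M v}. F (plusu lam (Suc l)) + F (minusu lam (Suc l))))"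
      by (rule sum_distrib_left)
    also have "\<dots> = (\<Sum>v=0..n. (1 - Q ^ k v) * U v + (1 - Q ^ k v) * L v)"
      using CS by (intro sum.cong) auto
    finally show ?thesis .
  qed
  have kk: "\<And>v. v \<le> n \<Longrightarrow> nat (e v - e (Suc v)) = k v"
    unfolding k_def using ecast by (metis le_SucI Suc_le_mono nat_diff_distrib' nat_int ext_bounds(1)[OF mu] e_def)
  have k0: "nat (int m - e 1) = k 0" "nat (int m - e 1 - 1) = k 0 - 1"
    using kk[of 0] M0 ecast[of 0] by (auto simp: e_def)
  have kn: "nat (e n) = k n" "nat (e n - 1) = k n - 1"
    using ecast[of n] M0 unfolding k_def by auto
  define psi where "psi \<nu> = HLR (pp * qp) (pp + qp) q m (conjp n m \<nu>) \<xi>" for \<nu>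
  have PS: "(\<Sum>i\<in>{i\<in>{1..n}. plusu \<mu> i \<in> Lam n m}.
        complex_of_real ((if i = 1 then 1 - (pp * qp) * q ^ nat (int m - ext n m \<mu> 1 - 1) else 1)
                         * (1 - q ^ nat (ext n m \<mu> (i - 1) - ext n m \<mu> i))) * psi (plusu \<mu> i))
      = (\<Sum>v<n. complex_of_real ((if v = 0 then 1 - (pp * qp) * q ^ (k 0 - 1) else 1) * (1 - q ^ k v)) * U v)"
  proof -
    have "(\<Sum>i\<in>{i\<in>{1..n}. plusu \<mu> i \<in> Lam n m}.
        complex_of_real ((if i = 1 then 1 - (pp * qp) * q ^ nat (int m - ext n m \<mu> 1 - 1) else 1)
                         * (1 - q ^ nat (ext n m \<mu> (i - 1) - ext n m \<mu> i))) * psi (plusu \<mu> i))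
      = (\<Sum>i=1..n. complex_of_real ((if i - 1 = 0 then 1 - (pp * qp) * q ^ (k 0 - 1) else 1) * (1 - q ^ k (i - 1))) * U (i - 1))"
      unfolding sum.inter_filter[OF finite_atLeastAtMost]
    proof (rule sum.cong[OF refl])
      fix i assume i: "i \<in> {1..n}"
      have sv: "Suc (i - 1) = i" using i by auto
      have kc: "nat (ext n m \<mu> (i - 1) - ext n m \<mu> i) = k (i - 1)" using kk[of "i - 1"] i sv unfolding e_def by auto
      have i1: "(i = 1) = (i - 1 = 0)" using i by auto
      have ein: "e i = \<mu> i" unfolding e_def using i by (simp add: ext_in)
      show "(if plusu \<mu> i \<in> Lam n m then complex_of_real ((if i = 1 then 1 - (pp * qp) * q ^ nat (int m - ext n m \<mu> 1 - 1) else 1)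
                         * (1 - q ^ nat (ext n m \<mu> (i - 1) - ext n m \<mu> i))) * psi (plusu \<mu> i) else 0)
        = complex_of_real ((if i - 1 = 0 then 1 - (pp * qp) * q ^ (k 0 - 1) else 1) * (1 - q ^ k (i - 1))) * U (i - 1)"
      proof (cases "plusu \<mu> i \<in> Lam n m")
        case True
        have b1: "0 \<le> \<mu> i" using Lam_D(2)[OF mu i] .
        have b2: "\<mu> i + 1 \<le> int m" using Lam_D(3)[OF True i] by (simp add: plusu_def)
        have "psi (plusu \<mu> i) = F (plusu lam (nat (\<mu> i) + 1))"
          unfolding psi_def F_def conjp_eq[OF True] cj_plus[where \<mu>=\<mu> and i=i and n=n and m=m, OF i b1 b2] lam_def ..
        also have "nat (\<mu> i) + 1 = Suc (M (Suc (i - 1)))" unfolding sv M_def ein by simp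
        finally have "psi (plusu \<mu> i) = U (i - 1)" unfolding U_def .
        then show ?thesis using True unfolding kc i1 k0(2)[unfolded e_def] by simp
      next
        case False
        have "\<not> ext n m \<mu> i < ext n m \<mu> (i - 1)" using valid_plus[OF mu i] False by blast
        then have "ext n m \<mu> (i - 1) = ext n m \<mu> i" using ext_mono[OF mu, of "i - 1" i] i by auto
        then have "k (i - 1) = 0" using kc by simp
        then show ?thesis using False by simp
      qed
    qed
    also have "\<dots> = (\<Sum>v<n. complex_of_real ((if v = 0 then 1 - (pp * qp) * q ^ (k 0 - 1) else 1) * (1 - q ^ k v)) * U v)"
      using sum.atLeast1_atMost_eq[of "\<lambda>i. complex_of_real ((if i - 1 = 0 then 1 - (pp * qp) * q ^ (k 0 - 1) else 1) * (1 - q ^ k (i - 1))) * U (i - 1)" n]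
      by simp
    finally show ?thesis .
  qed
  have MS: "(\<Sum>i\<in>{i\<in>{1..n}. minusu \<mu> i \<in> Lam n m}.
        complex_of_real ((if i = n then 1 - (pm * qm) * q ^ nat (ext n m \<mu> n - 1) else 1)
                         * (1 - q ^ nat (ext n m \<mu> i - ext n m \<mu> (Suc i)))) * psi (minusu \<mu> i))
      = (\<Sum>i=1..n. complex_of_real ((if i = n then 1 - (pm * qm) * q ^ (k n - 1) else 1) * (1 - q ^ k i)) * L i)"
    unfolding sum.inter_filter[OF finite_atLeastAtMost]
  proof (rule sum.cong[OF refl])
    fix i assume i: "i \<in> {1..n}"
    have kc: "nat (ext n m \<mu> i - ext n m \<mu> (Suc i)) = k i" using kk[of i] i unfolding e_def by auto
    have ein: "e i = \<mu> i" unfolding e_def using i by (simp add: ext_in)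
    show "(if minusu \<mu> i \<in> Lam n m then complex_of_real ((if i = n then 1 - (pm * qm) * q ^ nat (ext n m \<mu> n - 1) else 1)
                         * (1 - q ^ nat (ext n m \<mu> i - ext n m \<mu> (Suc i)))) * psi (minusu \<mu> i) else 0)
      = complex_of_real ((if i = n then 1 - (pm * qm) * q ^ (k n - 1) else 1) * (1 - q ^ k i)) * L i"
    proof (cases "minusu \<mu> i \<in> Lam n m")
      case True
      have b1: "1 \<le> \<mu> i" using Lam_D(2)[OF True i] by (simp add: minusu_def)
      have b2: "\<mu> i \<le> int m" using Lam_D(3)[OF mu i] .
      have "psi (minusu \<mu> i) = F (minusu lam (nat (\<mu> i)))"
        unfolding psi_def F_def conjp_eq[OF True] cj_minus[where \<mu>=\<mu> and i=i and n=n and m=m, OF i b1 b2] lam_def ..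
      also have "nat (\<mu> i) = M i" unfolding M_def ein ..
      finally have "psi (minusu \<mu> i) = L i" unfolding L_def .
      then show ?thesis using True unfolding kc kn(2)[unfolded e_def] by simp
    next
      case False
      have "\<not> ext n m \<mu> (Suc i) < ext n m \<mu> i" using valid_minus[OF mu i] False by blast
      then have "ext n m \<mu> (Suc i) = ext n m \<mu> i" using ext_mono[OF mu, of i "Suc i"] i by auto
      then have "k i = 0" using kc by simp
      then show ?thesis using False by simp
    qed
  qed
  have BF0: "(1 - Q ^ k 0) * L 0 = (1 - Q ^ k 0) * ((pp + qp) * F lam - (pp * qp) * Q ^ (k 0 - 1) * U 0)"
  proof (cases "k 0 = 0")
    case False
    have Mlt: "M 1 < m" using False M0 unfolding k_def by simp
    have m1: "1 \<le> m" using Mlt by simp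
    have lm: "lam m = 0" using CL[of 0 m] Mlt M0 by simp
    have g: "F (plusu lam m) = Q ^ (k 0 - 1) * U 0"
    proof -
      have "F (plusu lam (Suc (M 1 + (k 0 - 1)))) = Q ^ (k 0 - 1) * F (plusu lam (Suc (M 1)))"
        using geo_up[where h="\<lambda>l. F (plusu lam (Suc l))" and A="M 1" and B="M 0" and c=Q and d="k 0 - 1"]
          EXU[of 0] M0 Mlt False unfolding k_def by simp
      moreover have "Suc (M 1 + (k 0 - 1)) = m" using Mlt M0 unfolding k_def by simp
      ultimately show ?thesis unfolding U_def by simp
    qed
    have "L 0 = (pp + qp) * F lam - (pp * qp) * F (plusu lam m)"
      unfolding L_def M0 F_def using L_b0[where la=lam and m=m and ap="pp * qp" and bp="pp + qp" and q=q, OF reg m1 lm] by simp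
    then show ?thesis unfolding g by (simp add: mult.assoc)
  qed simp
  have BFn: "(1 - Q ^ k n) * U n = (1 - Q ^ k n) * ((pm + qm) * F lam - (pm * qm) * Q ^ (k n - 1) * L n)"
  proof (cases "k n = 0")
    case False
    have Mpos: "0 < M n" using False M0 unfolding k_def by simp
    have m1: "1 \<le> m" using Mpos Mle[of n] by simp
    have l1: "lam 1 = int n" using CL[of n 1] Mpos M0 by simp
    have g: "F (minusu lam 1) = Q ^ (k n - 1) * L n"
    proof -
      have "F (minusu lam (Suc (M n - 1 - (M n - 1)))) = Q ^ (M n - 1) * F (minusu lam (Suc (M n - 1)))"
        using geo_dn[where h="\<lambda>l. F (minusu lam (Suc l))" and A="M (Suc n)" and B="M n" and c=Q and d="M n - 1"]
          EXD[of n] M0 Mpos by simp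
      moreover have "Suc (M n - 1) = M n" using Mpos by simp
      moreover have "k n = M n" unfolding k_def using M0 by simp
      ultimately show ?thesis unfolding L_def by simp
    qed
    have "U n = (pm + qm) * F lam - (pm * qm) * F (minusu lam 1)"
      unfolding U_def M0 F_def using L_bn[where la=lam and m=m and n=n, OF reg m1 l1 B bnd qb] by (simp add: algebra_simps)
    then show ?thesis unfolding g by (simp add: mult.assoc)
  qed simp
  have PS2: "(\<Sum>v<n. complex_of_real ((if v = 0 then 1 - (pp * qp) * q ^ (k 0 - 1) else 1) * (1 - q ^ k v)) * U v)
      = (\<Sum>v<n. (1 - Q ^ k v) * U v) - (pp * qp) * Q ^ (k 0 - 1) * (1 - Q ^ k 0) * U 0"
  proof -
    have "(\<Sum>v<n. complex_of_real ((if v = 0 then 1 - (pp * qp) * q ^ (k 0 - 1) else 1) * (1 - q ^ k v)) * U v)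
      = (\<Sum>v<n. (1 - Q ^ k v) * U v - (if v = 0 then (pp * qp) * Q ^ (k 0 - 1) * (1 - Q ^ k 0) * U 0 else 0))"
      by (rule sum.cong) (auto simp: Q_def algebra_simps)
    also have "\<dots> = (\<Sum>v<n. (1 - Q ^ k v) * U v) - (pp * qp) * Q ^ (k 0 - 1) * (1 - Q ^ k 0) * U 0"
      unfolding sum_subtractf using n1 by simp
    finally show ?thesis .
  qed
  have MS2: "(\<Sum>i=1..n. complex_of_real ((if i = n then 1 - (pm * qm) * q ^ (k n - 1) else 1) * (1 - q ^ k i)) * L i)
      = (\<Sum>i=1..n. (1 - Q ^ k i) * L i) - (pm * qm) * Q ^ (k n - 1) * (1 - Q ^ k n) * L n"
  proof -
    have "(\<Sum>i=1..n. complex_of_real ((if i = n then 1 - (pm * qm) * q ^ (k n - 1) else 1) * (1 - q ^ k i)) * L i)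
      = (\<Sum>i=1..n. (1 - Q ^ k i) * L i - (if i = n then (pm * qm) * Q ^ (k n - 1) * (1 - Q ^ k n) * L n else 0))"
      by (rule sum.cong) (auto simp: Q_def algebra_simps)
    also have "\<dots> = (\<Sum>i=1..n. (1 - Q ^ k i) * L i) - (pm * qm) * Q ^ (k n - 1) * (1 - Q ^ k n) * L n"
      unfolding sum_subtractf using n1 by simp
    finally show ?thesis .
  qed
  have R1: "(\<Sum>v=0..n. (1 - Q ^ k v) * U v + (1 - Q ^ k v) * L v)
      = (\<Sum>v<n. (1 - Q ^ k v) * U v) + (1 - Q ^ k n) * U n + ((1 - Q ^ k 0) * L 0 + (\<Sum>i=1..n. (1 - Q ^ k i) * L i))"
  proof -
    have a: "(\<Sum>v=0..n. (1 - Q ^ k v) * U v) = (\<Sum>v<n. (1 - Q ^ k v) * U v) + (1 - Q ^ k n) * U n"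
      unfolding atLeast0AtMost lessThan_Suc_atMost[symmetric] by simp
    have b: "(\<Sum>v=0..n. (1 - Q ^ k v) * L v) = (1 - Q ^ k 0) * L 0 + (\<Sum>i=1..n. (1 - Q ^ k i) * L i)"
      using sum.atLeast_Suc_atMost[of 0 n "\<lambda>v. (1 - Q ^ k v) * L v"] by simp
    show ?thesis unfolding sum.distrib a b ..
  qed
  have diag: "complex_of_real ((pp + qp) * (1 - q ^ nat (int m - ext n m \<mu> 1)) + (pm + qm) * (1 - q ^ nat (ext n m \<mu> n)))
      = (pp + qp) * (1 - Q ^ k 0) + (pm + qm) * (1 - Q ^ k n)"
    using k0(1) kn(1) unfolding e_def Q_def by simp
  have H: "Ham (pp * qp) (pp + qp) (pm * qm) (pm + qm) q n m psi \<mu>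
      = ((pp + qp) * (1 - Q ^ k 0) + (pm + qm) * (1 - Q ^ k n)) * F lam
        + ((\<Sum>v<n. (1 - Q ^ k v) * U v) - (pp * qp) * Q ^ (k 0 - 1) * (1 - Q ^ k 0) * U 0)
        + ((\<Sum>i=1..n. (1 - Q ^ k i) * L i) - (pm * qm) * Q ^ (k n - 1) * (1 - Q ^ k n) * L n)"
    unfolding Ham_def PS MS PS2 MS2 diag using Fconj unfolding psi_def by simp
  have Fpsi: "psi \<mu> = F lam" unfolding psi_def using Fconj .
  have "Ham (pp * qp) (pp + qp) (pm * qm) (pm + qm) q n m psi \<mu>
      = complex_of_real (2 * (1 - q) * (\<Sum>j=1..m. cos (\<xi> j))) * F lam"
    unfolding H FREE R1 BF0 BFn by (simp add: algebra_simps)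
  then show ?thesis unfolding psi_def[symmetric] Fpsi .
qed

theorem theorem3p1:
  fixes m n :: nat and q pp qp pm qm :: real and \<xi> :: "nat \<Rightarrow> real"
  assumes "1 \<le> n"
    and "-1 < q" "q < 1" "q \<noteq> 0"
    and "-1 < pp" "pp < 1" "pp \<noteq> 0" "-1 < qp" "qp < 1" "qp \<noteq> 0"
    and "-1 < pm" "pm < 1" "pm \<noteq> 0" "-1 < qm" "qm < 1" "qm \<noteq> 0"
    and "reg m \<xi>"
    and "bethe (pp * qp) (pp + qp) (pm * qm) (pm + qm) q n m \<xi>"
  shows "\<forall>\<mu>\<in>Lam n m.
           Ham (pp * qp) (pp + qp) (pm * qm) (pm + qm) q n m
               (\<lambda>\<nu>. HLR (pp * qp) (pp + qp) q m (conjp n m \<nu>) \<xi>) \<mu>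
         = complex_of_real (2 * (1 - q) * (\<Sum>j=1..m. cos (\<xi> j)))
           * HLR (pp * qp) (pp + qp) q m (conjp n m \<mu>) \<xi>"
proof
  fix \<mu> assume mu: "\<mu> \<in> Lam n m"
  have b: "\<bar>pp\<bar> < 1" "\<bar>qp\<bar> < 1" "\<bar>pm\<bar> < 1" "\<bar>qm\<bar> < 1" using assms by auto
  show "Ham (pp * qp) (pp + qp) (pm * qm) (pm + qm) q n m
               (\<lambda>\<nu>. HLR (pp * qp) (pp + qp) q m (conjp n m \<nu>) \<xi>) \<mu>
         = complex_of_real (2 * (1 - q) * (\<Sum>j=1..m. cos (\<xi> j)))
           * HLR (pp * qp) (pp + qp) q m (conjp n m \<mu>) \<xi>"
    by (rule main_mu[OF assms(1,2,3) b assms(17,18) mu])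
qed

end
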